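(* Let $\nu$ be a group which has a perfect normal subgroup $\kappa$ with $\nu/\kappa$ solvable. If $\nu=G*H$ is a free product, then either $G$ or $H$ is perfect, or $\nu/\kappa$ is isomorphic to the infinite dihedral group $D_\infty=\mathbb{Z}\rtimes_{-1}\mathbb{Z}/2$. *)

theory Defs
  imports "HOL-Algebra.Algebra"
begin

definition perfect_subgroup :: "('a, 'b) monoid_scheme \<Rightarrow> 'a set \<Rightarrow> bool" where
  "perfect_subgroup N S \<longleftrightarrow> subgroup S N \<and> derived N S = S"

definition alternating_word :: "('a, 'b) monoid_scheme \<Rightarrow> 'a set \<Rightarrow> 'a set \<Rightarrow> 'a list \<Rightarrow> bool" where
  "alternating_word N G H xs \<longleftrightarrow>
     xs \<noteq> [] \<and> set xs \<subseteq> (G \<union> H) - {\<one>\<^bsub>N\<^esub>} \<and>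
     (\<forall>i. Suc i < length xs \<longrightarrow>
        \<not> (xs ! i \<in> G \<and> xs ! Suc i \<in> G) \<and> \<not> (xs ! i \<in> H \<and> xs ! Suc i \<in> H))"

definition free_product :: "('a, 'b) monoid_scheme \<Rightarrow> 'a set \<Rightarrow> 'a set \<Rightarrow> bool" where
  "free_product N G H \<longleftrightarrow>
     subgroup G N \<and> subgroup H N \<and> G \<inter> H = {\<one>\<^bsub>N\<^esub>} \<and>
     generate N (G \<union> H) = carrier N \<and>
     (\<forall>xs. alternating_word N G H xs \<longrightarrow> foldr (\<otimes>\<^bsub>N\<^esub>) xs \<one>\<^bsub>N\<^esub> \<noteq> \<one>\<^bsub>N\<^esub>)"

text \<open>The infinite dihedral group Z \<rtimes>_{-1} Z/2: elements (a, s) with a \<in> Z and s \<in> Z/2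
  (s = True meaning the nontrivial element), product (a,s)(b,t) = (a + (-1)^s b, s + t).\<close>
definition Dinf :: "(int \<times> bool) monoid" where
  "Dinf = \<lparr> carrier = UNIV,
            monoid.mult = (\<lambda>x y. (fst x + (if snd x then - fst y else fst y), snd x \<noteq> snd y)),
            one = (0, False) \<rparr>"

end

theory Submission
  imports Defs
begin

locale fprod = group N for N (structure) + fixes G H assumes fp: "free_product N G H"
begin

lemma sgG: "subgroup G N" and sgH: "subgroup H N" and GH_int: "G \<inter> H = {\<one>}"
  and gen: "generate N (G \<union> H) = carrier N"
  and nontriv0: "alternating_word N G H xs \<Longrightarrow> foldr (\<otimes>) xs \<one> \<noteq> \<one>"
  using fp unfolding free_product_def by auto

definition same :: "'a \<Rightarrow> 'a \<Rightarrow> bool" where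
  "same c d \<longleftrightarrow> (c \<in> G \<and> d \<in> G) \<or> (c \<in> H \<and> d \<in> H)"

definition LL :: "'a set" where "LL = (G \<union> H) - {\<one>}"

definition red :: "'a list \<Rightarrow> bool" where
  "red w \<longleftrightarrow> set w \<subseteq> LL \<and> successively (\<lambda>x y. \<not> same x y) w"

abbreviation wprod :: "'a list \<Rightarrow> 'a" where "wprod w \<equiv> foldr (\<otimes>) w \<one>"

lemma alternating_iff: "alternating_word N G H w \<longleftrightarrow> w \<noteq> [] \<and> red w"
  unfolding alternating_word_def red_def LL_def successively_conv_nth same_def by blast

lemma nontriv: "red w \<Longrightarrow> w \<noteq> [] \<Longrightarrow> wprod w \<noteq> \<one>"
  using nontriv0 alternating_iff by blast

lemma G_carr: "G \<subseteq> carrier N" and H_carr: "H \<subseteq> carrier N"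
  using sgG sgH subgroup.subset by auto

lemma LL_carr: "x \<in> LL \<Longrightarrow> x \<in> carrier N"
  using G_carr H_carr unfolding LL_def by auto

lemma wprod_closed: "set w \<subseteq> carrier N \<Longrightarrow> wprod w \<in> carrier N"
  by (induction w) auto

lemma foldr_mult: "set u \<subseteq> carrier N \<Longrightarrow> x \<in> carrier N \<Longrightarrow> foldr (\<otimes>) u x = wprod u \<otimes> x"
  by (induction u) (auto simp: m_assoc wprod_closed)

lemma wprod_append: "set u \<subseteq> carrier N \<Longrightarrow> set v \<subseteq> carrier N \<Longrightarrow>
   wprod (u @ v) = wprod u \<otimes> wprod v"
proof -
  assume a: "set u \<subseteq> carrier N" "set v \<subseteq> carrier N"
  have "wprod (u @ v) = foldr (\<otimes>) u (wprod v)" by simp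
  also have "\<dots> = wprod u \<otimes> wprod v" using foldr_mult[of u "wprod v"] a wprod_closed by blast
  finally show ?thesis .
qed

lemma red_Cons: "red (x # w) \<longleftrightarrow> x \<in> LL \<and> red w \<and> (w = [] \<or> \<not> same x (hd w))"
  unfolding red_def by (auto simp: successively_Cons)

lemma red_tl: "red (x # w) \<Longrightarrow> red w"
  by (simp add: red_Cons)

lemma LL_cases: "x \<in> LL \<Longrightarrow> (x \<in> G \<and> x \<notin> H) \<or> (x \<in> H \<and> x \<notin> G)"
  using GH_int unfolding LL_def by auto

lemma inv_G: "x \<in> carrier N \<Longrightarrow> inv x \<in> G \<longleftrightarrow> x \<in> G"
  by (metis inv_inv sgG subgroup.m_inv_closed)
lemma inv_H: "x \<in> carrier N \<Longrightarrow> inv x \<in> H \<longleftrightarrow> x \<in> H"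
  by (metis inv_inv sgH subgroup.m_inv_closed)

lemma inv_LL: assumes "x \<in> LL" shows "inv x \<in> LL"
proof -
  have c: "x \<in> carrier N" using assms LL_carr by auto
  have "inv x \<in> G \<union> H" using assms c inv_G inv_H unfolding LL_def by auto
  moreover have "inv x \<noteq> \<one>" using assms c unfolding LL_def by (metis DiffD2 inv_inv inv_one singletonI)
  ultimately show ?thesis unfolding LL_def by auto
qed 

lemma same_inv: "x \<in> carrier N \<Longrightarrow> y \<in> carrier N \<Longrightarrow> same (inv x) (inv y) \<longleftrightarrow> same x y"
  unfolding same_def using inv_G inv_H by auto

lemma same_inv1: "x \<in> carrier N \<Longrightarrow> same (inv x) y \<longleftrightarrow> same x y"
  unfolding same_def using inv_G inv_H by auto

lemma same_sym: "same x y \<longleftrightarrow> same y x" unfolding same_def by auto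

lemma wprod_inv_rev: "set u \<subseteq> carrier N \<Longrightarrow> wprod (map (m_inv N) (rev u)) = inv (wprod u)"
proof (induction u)
  case Nil then show ?case by simp
next
  case (Cons a u)
  have "wprod (map (m_inv N) (rev (a # u))) = wprod (map (m_inv N) (rev u)) \<otimes> wprod [inv a]"
    using Cons.prems wprod_append[of "map (m_inv N) (rev u)" "[inv a]"] by (auto simp del: foldr_append)
  also have "\<dots> = inv (wprod u) \<otimes> inv a" using Cons by simp
  also have "\<dots> = inv (a \<otimes> wprod u)" using Cons.prems wprod_closed
    by (simp add: inv_mult_group)
  finally show ?case by simp
qed

lemma red_inv_rev: assumes "red u" shows "red (map (m_inv N) (rev u))"
proof -
  have s: "set u \<subseteq> LL" and q: "successively (\<lambda>x y. \<not> same x y) u" using assms red_def by auto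
  have "set (map (m_inv N) (rev u)) \<subseteq> LL" using s inv_LL by auto
  moreover have "successively (\<lambda>x y. \<not> same x y) (map (m_inv N) (rev u))"
    unfolding successively_map successively_rev
  proof (rule successively_mono[OF q])
    fix x y assume xy: "x \<in> set u" "y \<in> set u" "\<not> same x y"
    then have "x \<in> carrier N" "y \<in> carrier N" using s LL_carr by auto
    then have "same (inv y) (inv x) = same x y" using same_inv[of y x] same_sym[of y x] by simp
    then show "\<not> same (m_inv N y) (m_inv N x)" using xy by simp
  qed
  ultimately show ?thesis unfolding red_def by simp
qed

lemma red_append: "red u \<Longrightarrow> red v \<Longrightarrow> u \<noteq> [] \<Longrightarrow> v \<noteq> [] \<Longrightarrow> \<not> same (last u) (hd v)
   \<Longrightarrow> red (u @ v)"
  unfolding red_def by (auto simp: successively_append_iff)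

lemma red_set_carr: "red u \<Longrightarrow> set u \<subseteq> carrier N"
  unfolding red_def using LL_carr by auto

lemma nf_unique: "red u \<Longrightarrow> red v \<Longrightarrow> wprod u = wprod v \<Longrightarrow> u = v"
proof (induction "length u + length v" arbitrary: u v rule: less_induct)
  case less
  show ?case
  proof (cases u)
    case Nil
    show ?thesis
    proof (cases "v = []")
      case False
      then have "wprod v \<noteq> \<one>" using nontriv less.prems by blast
      then show ?thesis using less.prems Nil by simp
    qed (use Nil in simp)
  next
    case (Cons a u')
    show ?thesis
    proof (cases v)
      case Nil
      have "wprod u \<noteq> \<one>" using nontriv less.prems \<open>u = a # u'\<close> by blast
      then show ?thesis using less.prems Nil by simp
    next
      case (Cons b v')
      have a: "a \<in> LL" and b: "b \<in> LL" using less.prems \<open>u = a # u'\<close> Cons by (auto simp: red_Cons)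
      have ac: "a \<in> carrier N" and bc: "b \<in> carrier N" using a b LL_carr by auto
      have ru': "red u'" and rv': "red v'" using less.prems \<open>u = a # u'\<close> Cons red_tl by auto
      have cu': "wprod u' \<in> carrier N" and cv': "wprod v' \<in> carrier N"
        using ru' rv' red_set_carr wprod_closed by auto
      have eq: "a \<otimes> wprod u' = b \<otimes> wprod v'" using less.prems \<open>u = a # u'\<close> Cons by simp
      show ?thesis
      proof (cases "same a b")
        case True
        show ?thesis
        proof (cases "a = b")
          case True
          then have "wprod u' = wprod v'" using eq ac cu' cv' by simp
          then have "u' = v'" using less.hyps[of u' v'] ru' rv' \<open>u = a # u'\<close> Cons by simp
          then show ?thesis using True \<open>u = a # u'\<close> Cons by simp
        next
          case False
          define c where "c = inv a \<otimes> b"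
          have cc: "c \<in> carrier N" using ac bc c_def by simp
          have c1: "c \<noteq> \<one>"
          proof
            assume "c = \<one>"
            then have "a \<otimes> c = a" using ac by simp
            moreover have "a \<otimes> c = b" using ac bc c_def by (simp add: m_assoc[symmetric])
            ultimately show False using False by simp
          qed
          have samecb: "same c b \<and> same a c"
            using True ac bc sgG sgH unfolding same_def c_def
            by (auto intro: subgroup.m_closed subgroup.m_inv_closed)
          have "c \<in> LL"
          proof -
            have "c \<in> G \<union> H" using samecb unfolding same_def by auto
            then show ?thesis using c1 LL_def by auto
          qed
          have nsame: "v' = [] \<or> \<not> same c (hd v')"
          proof (cases v')
            case (Cons e r)
            have "\<not> same b e" using less.prems(2) \<open>v = b # v'\<close> Cons by (simp add: red_Cons)
            moreover have "b \<in> LL" by fact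
            moreover have "e \<in> LL" using rv' Cons by (simp add: red_Cons)
            ultimately have "\<not> same c e" using samecb \<open>c \<in> LL\<close> LL_cases unfolding same_def by blast
            then show ?thesis using Cons by simp
          qed simp
          have rc: "red (c # v')" using \<open>c \<in> LL\<close> rv' nsame by (simp add: red_Cons)
          have "wprod u' = c \<otimes> wprod v'"
          proof -
            have "wprod u' = inv a \<otimes> (a \<otimes> wprod u')" using ac cu' by (simp add: m_assoc[symmetric])
            also have "\<dots> = inv a \<otimes> (b \<otimes> wprod v')" using eq by simp
            also have "\<dots> = c \<otimes> wprod v'" using ac bc cv' c_def by (simp add: m_assoc)
            finally show ?thesis .
          qed
          then have "u' = c # v'" using less.hyps[of u' "c # v'"] ru' rc \<open>u = a # u'\<close> Cons by simp
          then have "red (a # c # v')" using less.prems(1) \<open>u = a # u'\<close> by simp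
          then show ?thesis using samecb by (simp add: red_Cons)
        qed
      next
        case False
        define w where "w = map (m_inv N) (rev u) @ v"
        have "red w" unfolding w_def
        proof (rule red_append)
          show "red (map (m_inv N) (rev u))" using red_inv_rev less.prems by auto
          show "\<not> same (last (map (m_inv N) (rev u))) (hd v)"
            using False same_inv1[of a b] ac bc \<open>u = a # u'\<close> Cons by (simp add: last_map)
        qed (use less.prems \<open>u = a # u'\<close> Cons in auto)
        moreover have "wprod w = \<one>"
        proof -
          have su: "set u \<subseteq> carrier N" and sv: "set v \<subseteq> carrier N" using less.prems red_set_carr by auto
          have "set (map (m_inv N) (rev u)) \<subseteq> carrier N" using su by auto
          then have "wprod w = wprod (map (m_inv N) (rev u)) \<otimes> wprod v"
            unfolding w_def using sv wprod_append by blast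
          also have "\<dots> = inv (wprod u) \<otimes> wprod u" using su wprod_inv_rev less.prems(3) by simp
          also have "\<dots> = \<one>" using su wprod_closed by simp
          finally show ?thesis .
        qed
        moreover have "w \<noteq> []" by (simp add: w_def Cons)
        ultimately show ?thesis using nontriv by blast
      qed
    qed
  qed
qed

end

context fprod begin

definition rcons :: "'a \<Rightarrow> 'a list \<Rightarrow> 'a list" where
 "rcons c w = (if c = \<one> then w else case w of [] \<Rightarrow> [c] | d # r \<Rightarrow>
     (if same c d then (if c \<otimes> d = \<one> then r else (c \<otimes> d) # r) else c # w))"

lemma red_Nil [simp]: "red []" by (simp add: red_def)

lemma GH_carr: "c \<in> G \<union> H \<Longrightarrow> c \<in> carrier N"
  using G_carr H_carr by auto

lemma LL_GH: "c \<in> G \<union> H \<Longrightarrow> c \<noteq> \<one> \<Longrightarrow> c \<in> LL"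
  unfolding LL_def by auto

lemma same_trans: "x \<in> LL \<Longrightarrow> y \<in> LL \<Longrightarrow> e \<in> LL \<Longrightarrow> same x y \<Longrightarrow> same x e \<longleftrightarrow> same y e"
  using LL_cases[of x] LL_cases[of y] LL_cases[of e] unfolding same_def by blast

lemma same_mult_GH: assumes "c \<in> G \<union> H" "d \<in> G \<union> H" "same c d"
  shows "c \<otimes> d \<in> G \<union> H" "c \<noteq> \<one> \<Longrightarrow> c \<otimes> d \<noteq> \<one> \<Longrightarrow> same (c \<otimes> d) d"
proof -
  have "(c \<in> G \<and> d \<in> G) \<or> (c \<in> H \<and> d \<in> H)" using assms(3) same_def by auto
  then have "(c \<otimes> d \<in> G \<and> d \<in> G) \<or> (c \<otimes> d \<in> H \<and> d \<in> H)"
  proof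
    assume "c \<in> G \<and> d \<in> G" then show ?thesis using subgroup.m_closed[OF sgG, of c d] by simp
  next
    assume "c \<in> H \<and> d \<in> H" then show ?thesis using subgroup.m_closed[OF sgH, of c d] by simp
  qed
  then show "c \<otimes> d \<in> G \<union> H" "c \<noteq> \<one> \<Longrightarrow> c \<otimes> d \<noteq> \<one> \<Longrightarrow> same (c \<otimes> d) d"
    unfolding same_def by blast+
qed

lemma rcons_red: assumes c: "c \<in> G \<union> H" and w: "red w" shows "red (rcons c w)"
proof (cases "c = \<one>")
  case True then show ?thesis using w by (simp add: rcons_def)
next
  case c1: False
  have cL: "c \<in> LL" using c c1 LL_GH by auto
  show ?thesis
  proof (cases w)
    case Nil then show ?thesis using c1 cL by (simp add: rcons_def red_Cons)
  next
    case (Cons d r)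
    have dL: "d \<in> LL" and rr: "red r" and nd: "r = [] \<or> \<not> same d (hd r)"
      using w Cons by (auto simp: red_Cons)
    have dGH: "d \<in> G \<union> H" using dL LL_def by auto
    show ?thesis
    proof (cases "same c d")
      case True
      show ?thesis
      proof (cases "c \<otimes> d = \<one>")
        case True then show ?thesis using rr c1 \<open>same c d\<close> Cons by (simp add: rcons_def)
      next
        case False
        have cdL: "c \<otimes> d \<in> LL" using same_mult_GH(1)[OF c dGH \<open>same c d\<close>] False LL_GH by auto
        have sd: "same (c \<otimes> d) d" using same_mult_GH(2)[OF c dGH \<open>same c d\<close> c1 False] .
        have "r = [] \<or> \<not> same (c \<otimes> d) (hd r)"
        proof (cases r)
          case (Cons e r')
          have "e \<in> LL" using rr Cons by (simp add: red_Cons)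
          then show ?thesis using nd same_trans[OF cdL dL _ sd] Cons by auto
        qed simp
        then show ?thesis using rr cdL c1 \<open>same c d\<close> False Cons by (simp add: rcons_def red_Cons)
      qed
    next
      case False
      then show ?thesis using w cL c1 Cons by (simp add: rcons_def red_Cons)
    qed
  qed
qed

lemma rcons_prod: assumes c: "c \<in> G \<union> H" and w: "red w" shows "wprod (rcons c w) = c \<otimes> wprod w"
proof -
  have cc: "c \<in> carrier N" using c GH_carr by auto
  have sw: "set w \<subseteq> carrier N" using w red_set_carr by auto
  show ?thesis
  proof (cases "c = \<one>")
    case True then show ?thesis using sw wprod_closed by (simp add: rcons_def)
  next
    case c1: False
    show ?thesis
    proof (cases w)
      case Nil then show ?thesis using c1 cc by (simp add: rcons_def)
    next
      case (Cons d r)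
      have dc: "d \<in> carrier N" and sr: "set r \<subseteq> carrier N" using sw Cons by auto
      have pr: "wprod r \<in> carrier N" using sr wprod_closed by auto
      show ?thesis
      proof (cases "same c d")
        case True
        show ?thesis
        proof (cases "c \<otimes> d = \<one>")
          case True
          have "c \<otimes> (d \<otimes> wprod r) = (c \<otimes> d) \<otimes> wprod r" using cc dc pr by (simp add: m_assoc)
          then show ?thesis using True c1 \<open>same c d\<close> Cons pr by (simp add: rcons_def)
        next
          case False
          then show ?thesis using c1 \<open>same c d\<close> Cons cc dc pr by (simp add: rcons_def m_assoc)
        qed
      next
        case False
        then show ?thesis using c1 Cons by (simp add: rcons_def)
      qed
    qed
  qed
qed

lemma LL_sub_GH: "LL \<subseteq> G \<union> H" unfolding LL_def by auto

lemma foldr_rcons: "set w1 \<subseteq> G \<union> H \<Longrightarrow> red w2 \<Longrightarrow>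
   red (foldr rcons w1 w2) \<and> wprod (foldr rcons w1 w2) = wprod w1 \<otimes> wprod w2"
proof (induction w1)
  case Nil then show ?case using red_set_carr wprod_closed by simp
next
  case (Cons a w1)
  then have IH: "red (foldr rcons w1 w2)" "wprod (foldr rcons w1 w2) = wprod w1 \<otimes> wprod w2" by auto
  have a: "a \<in> G \<union> H" using Cons.prems by auto
  have "red (foldr rcons (a # w1) w2)" using rcons_red[OF a IH(1)] by simp
  moreover have "wprod (foldr rcons (a # w1) w2) = a \<otimes> (wprod w1 \<otimes> wprod w2)"
    using rcons_prod[OF a IH(1)] IH(2) by simp
  moreover have "a \<otimes> (wprod w1 \<otimes> wprod w2) = wprod (a # w1) \<otimes> wprod w2"
  proof -
    have ac: "a \<in> carrier N" using a GH_carr by auto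
    have "set w1 \<subseteq> carrier N" using Cons.prems GH_carr by auto
    then have p1: "wprod w1 \<in> carrier N" using wprod_closed by auto
    have p2: "wprod w2 \<in> carrier N" using Cons.prems(2) red_set_carr wprod_closed by auto
    show ?thesis using ac p1 p2 by (simp add: m_assoc)
  qed
  ultimately show ?case by simp
qed

lemma exists_red: assumes "x \<in> carrier N" shows "\<exists>w. red w \<and> wprod w = x"
proof -
  have "x \<in> generate N (G \<union> H)" using assms gen by simp
  then show ?thesis
  proof (induction rule: generate.induct)
    case one
    show ?case by (rule exI[of _ "[]"]) (simp add: red_def)
  next
    case (incl h)
    have r: "red (rcons h [])" "wprod (rcons h []) = h \<otimes> \<one>"
      using rcons_red[OF incl] rcons_prod[OF incl] by auto
    have "h \<otimes> \<one> = h" using GH_carr[OF incl] by simp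
    then show ?case using r by metis
  next
    case (inv h)
    have hi: "inv h \<in> G \<union> H"
    proof (cases "h \<in> G")
      case True then show ?thesis using subgroup.m_inv_closed[OF sgG] by auto
    next
      case False then have "h \<in> H" using inv by auto
      then show ?thesis using subgroup.m_inv_closed[OF sgH] by auto
    qed
    have r: "red (rcons (inv h) [])" "wprod (rcons (inv h) []) = inv h \<otimes> \<one>"
      using rcons_red[OF hi] rcons_prod[OF hi] by auto
    have "inv h \<otimes> \<one> = inv h" using GH_carr[OF hi] by simp
    then show ?case using r by metis
  next
    case (eng h1 h2)
    then obtain w1 w2 where w: "red w1" "wprod w1 = h1" "red w2" "wprod w2 = h2" by auto
    have "set w1 \<subseteq> G \<union> H" using w(1) LL_sub_GH unfolding red_def by blast
    then have "red (foldr rcons w1 w2) \<and> wprod (foldr rcons w1 w2) = h1 \<otimes> h2"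
      using foldr_rcons[of w1 w2] w by simp
    then show ?case by blast
  qed
qed

definition nf :: "'a \<Rightarrow> 'a list" where "nf x = (THE w. red w \<and> wprod w = x)"

lemma nf: assumes "x \<in> carrier N" shows "red (nf x)" "wprod (nf x) = x"
proof -
  have "\<exists>!w. red w \<and> wprod w = x" using exists_red[OF assms] nf_unique by blast
  then have "red (nf x) \<and> wprod (nf x) = x" unfolding nf_def by (rule theI')
  then show "red (nf x)" "wprod (nf x) = x" by auto
qed

lemma nf_eq: assumes "red w" shows "nf (wprod w) = w"
proof -
  have c: "wprod w \<in> carrier N" using assms red_set_carr wprod_closed by auto
  show ?thesis by (rule nf_unique[OF nf(1)[OF c] assms nf(2)[OF c]])
qed

lemma nf_one: "nf \<one> = []"
  using nf_eq[of "[]"] by (simp add: red_def)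

lemma nf_rcons: assumes "c \<in> G \<union> H" "x \<in> carrier N" shows "nf (c \<otimes> x) = rcons c (nf x)"
  using nf_eq[OF rcons_red[OF assms(1) nf(1)[OF assms(2)]]] rcons_prod[OF assms(1) nf(1)[OF assms(2)]]
    nf(2)[OF assms(2)] by simp

lemma hom_agree: assumes "group T" "f1 \<in> hom N T" "f2 \<in> hom N T" "\<And>x. x \<in> G \<union> H \<Longrightarrow> f1 x = f2 x"
  and "x \<in> carrier N" shows "f1 x = f2 x"
proof -
  interpret T: group T by fact
  interpret h1: group_hom N T f1 using assms by (simp add: group_hom_def group_hom_axioms_def is_group)
  interpret h2: group_hom N T f2 using assms by (simp add: group_hom_def group_hom_axioms_def is_group)
  have "x \<in> generate N (G \<union> H)" using assms gen by simp
  then show ?thesis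
  proof (induction rule: generate.induct)
    case one then show ?case by simp
  next
    case (incl h) then show ?case using assms by simp
  next
    case (inv h) then show ?case using assms GH_carr by simp
  next
    case (eng h1 h2)
    have "h1 \<in> carrier N" "h2 \<in> carrier N" using eng.hyps gen by auto
    then show ?case using eng.IH by simp
  qed
qed

end

context fprod begin

lemma univ:
  assumes T: "group T"
    and phi: "\<And>x. x \<in> G \<Longrightarrow> \<phi> x \<in> carrier T" "\<And>x y. x \<in> G \<Longrightarrow> y \<in> G \<Longrightarrow> \<phi> (x \<otimes> y) = \<phi> x \<otimes>\<^bsub>T\<^esub> \<phi> y"
    and psi: "\<And>x. x \<in> H \<Longrightarrow> \<psi> x \<in> carrier T" "\<And>x y. x \<in> H \<Longrightarrow> y \<in> H \<Longrightarrow> \<psi> (x \<otimes> y) = \<psi> x \<otimes>\<^bsub>T\<^esub> \<psi> y"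
  shows "\<exists>\<Phi> \<in> hom N T. (\<forall>g\<in>G. \<Phi> g = \<phi> g) \<and> (\<forall>h\<in>H. \<Phi> h = \<psi> h)"
proof -
  interpret T: group T by fact
  have one_G: "\<one> \<in> G" using sgG subgroup.one_closed by blast
  have one_H: "\<one> \<in> H" using sgH subgroup.one_closed by blast
  have self1: "x = \<one>\<^bsub>T\<^esub>" if "x \<in> carrier T" "x \<otimes>\<^bsub>T\<^esub> x = x" for x
    using that T.l_cancel_one by blast
  have phi1: "\<phi> \<one> = \<one>\<^bsub>T\<^esub>"
  proof (rule self1)
    show "\<phi> \<one> \<in> carrier T" using phi(1) one_G by simp
    show "\<phi> \<one> \<otimes>\<^bsub>T\<^esub> \<phi> \<one> = \<phi> \<one>" using phi(2)[OF one_G one_G] by simp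
  qed
  have psi1: "\<psi> \<one> = \<one>\<^bsub>T\<^esub>"
  proof (rule self1)
    show "\<psi> \<one> \<in> carrier T" using psi(1) one_H by simp
    show "\<psi> \<one> \<otimes>\<^bsub>T\<^esub> \<psi> \<one> = \<psi> \<one>" using psi(2)[OF one_H one_H] by simp
  qed
  define ev where "ev c = (if c \<in> G then \<phi> c else \<psi> c)" for c
  have evH: "ev c = \<psi> c" if "c \<in> H" for c
  proof (cases "c \<in> G")
    case True then have "c = \<one>" using that GH_int by auto
    then show ?thesis using phi1 psi1 ev_def by simp
  qed (simp add: ev_def)
  have evG: "ev c = \<phi> c" if "c \<in> G" for c using that ev_def by simp
  have ev_c: "ev c \<in> carrier T" if "c \<in> G \<union> H" for c using that evG evH phi psi by auto
  have ev_same: "ev (c \<otimes> d) = ev c \<otimes>\<^bsub>T\<^esub> ev d" if "same c d" for c d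
  proof -
    have "(c \<in> G \<and> d \<in> G) \<or> (c \<in> H \<and> d \<in> H)" using that same_def by auto
    then show ?thesis
    proof
      assume "c \<in> G \<and> d \<in> G"
      then show ?thesis using evG phi subgroup.m_closed[OF sgG, of c d] by simp
    next
      assume "c \<in> H \<and> d \<in> H"
      then show ?thesis using evH psi subgroup.m_closed[OF sgH, of c d] by simp
    qed
  qed
  have ev1: "ev \<one> = \<one>\<^bsub>T\<^esub>" using evG one_G phi1 by simp
  define F where "F w = foldr (\<lambda>c a. ev c \<otimes>\<^bsub>T\<^esub> a) w \<one>\<^bsub>T\<^esub>" for w
  have F_Nil: "F [] = \<one>\<^bsub>T\<^esub>" and F_Cons: "F (c # w) = ev c \<otimes>\<^bsub>T\<^esub> F w" for c w
    unfolding F_def by simp_all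
  have F_c: "F w \<in> carrier T" if "set w \<subseteq> G \<union> H" for w
    using that by (induction w) (auto simp: F_Nil F_Cons ev_c)
  define \<Phi> where "\<Phi> x = F (nf x)" for x
  have nfGH: "set (nf x) \<subseteq> G \<union> H" if "x \<in> carrier N" for x
    using nf(1)[OF that] LL_sub_GH unfolding red_def by blast
  have Phi_c: "\<Phi> x \<in> carrier T" if "x \<in> carrier N" for x
    using F_c nfGH that \<Phi>_def by simp
  have key: "\<Phi> (c \<otimes> x) = ev c \<otimes>\<^bsub>T\<^esub> \<Phi> x" if c: "c \<in> G \<union> H" and x: "x \<in> carrier N" for c x
  proof -
    have e: "\<Phi> (c \<otimes> x) = F (rcons c (nf x))" using nf_rcons[OF c x] \<Phi>_def by simp
    have PX: "\<Phi> x = F (nf x)" using \<Phi>_def by simp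
    have sx: "set (nf x) \<subseteq> G \<union> H" using nfGH x by simp
    show ?thesis
    proof (cases "c = \<one>")
      case True then show ?thesis using e PX ev1 Phi_c[OF x] by (simp add: rcons_def)
    next
      case c1: False
      show ?thesis
      proof (cases "nf x")
        case Nil then show ?thesis using e PX c1 F_Nil F_Cons ev_c[OF c] by (simp add: rcons_def)
      next
        case (Cons d r)
        have d: "d \<in> G \<union> H" and sr: "set r \<subseteq> G \<union> H" using sx Cons by auto
        have Fr: "F r \<in> carrier T" using F_c sr by simp
        show ?thesis
        proof (cases "same c d")
          case True
          have a: "ev c \<otimes>\<^bsub>T\<^esub> (ev d \<otimes>\<^bsub>T\<^esub> F r) = ev (c \<otimes> d) \<otimes>\<^bsub>T\<^esub> F r"
            using ev_same[OF True] ev_c[OF c] ev_c[OF d] Fr by (simp add: T.m_assoc)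
          show ?thesis
          proof (cases "c \<otimes> d = \<one>")
            case True
            then show ?thesis using e PX c1 \<open>same c d\<close> Cons a ev1 Fr by (simp add: rcons_def F_Cons)
          next
            case False
            then show ?thesis using e PX c1 \<open>same c d\<close> Cons a by (simp add: rcons_def F_Cons)
          qed
        next
          case False
          then show ?thesis using e PX c1 Cons by (simp add: rcons_def F_Cons)
        qed
      qed
    qed
  qed
  have key2: "\<Phi> (wprod w \<otimes> y) = F w \<otimes>\<^bsub>T\<^esub> \<Phi> y" if "set w \<subseteq> G \<union> H" "y \<in> carrier N" for w y
    using that
  proof (induction w)
    case Nil then show ?case using Phi_c F_Nil by simp
  next
    case (Cons a w)
    have a: "a \<in> G \<union> H" and sw: "set w \<subseteq> G \<union> H" using Cons.prems by auto
    have swc: "set w \<subseteq> carrier N" using sw GH_carr by auto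
    have pw: "wprod w \<in> carrier N" using wprod_closed swc by simp
    have "\<Phi> (wprod (a # w) \<otimes> y) = \<Phi> (a \<otimes> (wprod w \<otimes> y))"
      using GH_carr[OF a] pw Cons.prems(2) by (simp add: m_assoc)
    also have "\<dots> = ev a \<otimes>\<^bsub>T\<^esub> (F w \<otimes>\<^bsub>T\<^esub> \<Phi> y)"
      using key[OF a] pw Cons.prems(2) Cons.IH[OF sw Cons.prems(2)] by simp
    also have "\<dots> = F (a # w) \<otimes>\<^bsub>T\<^esub> \<Phi> y"
      using ev_c[OF a] F_c[OF sw] Phi_c[OF Cons.prems(2)] by (simp add: F_Cons T.m_assoc)
    finally show ?case .
  qed
  have hom: "\<Phi> \<in> hom N T"
  proof (rule homI)
    fix x assume "x \<in> carrier N" then show "\<Phi> x \<in> carrier T" by (rule Phi_c)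
  next
    fix x y assume x: "x \<in> carrier N" and y: "y \<in> carrier N"
    have "\<Phi> (x \<otimes> y) = \<Phi> (wprod (nf x) \<otimes> y)" using nf(2)[OF x] by simp
    also have "\<dots> = F (nf x) \<otimes>\<^bsub>T\<^esub> \<Phi> y" using key2 nfGH x y by simp
    finally show "\<Phi> (x \<otimes> y) = \<Phi> x \<otimes>\<^bsub>T\<^esub> \<Phi> y" using \<Phi>_def by simp
  qed
  have P1: "\<Phi> \<one> = \<one>\<^bsub>T\<^esub>" using \<Phi>_def nf_one F_Nil by simp
  have Pev: "\<Phi> c = ev c" if "c \<in> G \<union> H" for c
  proof -
    have "\<Phi> (c \<otimes> \<one>) = ev c \<otimes>\<^bsub>T\<^esub> \<Phi> \<one>" using key[OF that] by simp
    then show ?thesis using P1 ev_c[OF that] GH_carr[OF that] by simp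
  qed
  show ?thesis
  proof (rule bexI[OF _ hom], intro conjI ballI)
    fix g assume "g \<in> G" then show "\<Phi> g = \<phi> g" using Pev evG by simp
  next
    fix h assume "h \<in> H" then show "\<Phi> h = \<psi> h" using Pev evH by simp
  qed
qed

end

context fprod begin

lemma retractG: "\<exists>r \<in> hom N (N\<lparr>carrier := G\<rparr>). (\<forall>g\<in>G. r g = g)"
proof -
  have T: "group (N\<lparr>carrier := G\<rparr>)" using subgroup_imp_group[OF sgG] .
  have one_G: "\<one> \<in> G" using sgG subgroup.one_closed by blast
  obtain r where r: "r \<in> hom N (N\<lparr>carrier := G\<rparr>)" "\<forall>g\<in>G. r g = g" "\<forall>h\<in>H. r h = \<one>"
    using univ[OF T, of "\<lambda>x. x" "\<lambda>x. \<one>"] one_G sgG subgroup.m_closed[OF sgG]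
    by (auto simp: G_carr[THEN subsetD])
  then show ?thesis by blast
qed

lemma perfect_if_sub:
  assumes K: "K \<subseteq> carrier N" and dK: "derived N K = K" and GK: "G \<subseteq> K"
  shows "perfect_subgroup N G"
proof -
  obtain r where r: "r \<in> hom N (N\<lparr>carrier := G\<rparr>)" "\<forall>g\<in>G. r g = g" using retractG by blast
  have T: "group (N\<lparr>carrier := G\<rparr>)" using subgroup_imp_group[OF sgG] .
  interpret gh: group_hom N "N\<lparr>carrier := G\<rparr>" r
    using r(1) T by (simp add: group_hom_def group_hom_axioms_def is_group)
  have img: "r ` K = G"
  proof
    show "r ` K \<subseteq> G" using r(1) K unfolding hom_def by auto
    show "G \<subseteq> r ` K" using r(2) GK by (metis image_eqI subsetD subsetI)
  qed
  have "derived (N\<lparr>carrier := G\<rparr>) (r ` K) = r ` (derived N K)" using gh.derived_img[OF K] .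
  then have "derived (N\<lparr>carrier := G\<rparr>) G = G" using img dK by simp
  then have "derived N G = G" using derived_consistent[OF subset_refl sgG] by simp
  then show ?thesis unfolding perfect_subgroup_def using sgG by simp
qed

end

lemma fprod_swap: "fprod N G H \<Longrightarrow> fprod N H G"
  unfolding fprod_def fprod_axioms_def free_product_def alternating_word_def by (auto simp: Int_commute Un_commute)

definition act :: "('c, 'd) monoid_scheme \<Rightarrow> 'c \<Rightarrow> ('c \<Rightarrow> int) \<Rightarrow> ('c \<Rightarrow> int)" where
  "act S s f = (\<lambda>t. if t \<in> carrier S then f (inv\<^bsub>S\<^esub> s \<otimes>\<^bsub>S\<^esub> t) else f t)"

definition SD :: "('c, 'd) monoid_scheme \<Rightarrow> (('c \<Rightarrow> int) \<times> 'c) monoid" where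
  "SD S = \<lparr>carrier = {p. snd p \<in> carrier S},
           monoid.mult = (\<lambda>p p'. (\<lambda>t. fst p t + act S (snd p) (fst p') t, snd p \<otimes>\<^bsub>S\<^esub> snd p')),
           one = (\<lambda>_. 0, \<one>\<^bsub>S\<^esub>)\<rparr>"

definition dlt :: "'c \<Rightarrow> 'c \<Rightarrow> int" where "dlt u = (\<lambda>t. if t = u then 1 else 0)"

lemma SD_simps [simp]: "carrier (SD S) = {p. snd p \<in> carrier S}"
  "monoid.mult (SD S) p p' = (\<lambda>t. fst p t + act S (snd p) (fst p') t, snd p \<otimes>\<^bsub>S\<^esub> snd p')"
  "one (SD S) = (\<lambda>_. 0, \<one>\<^bsub>S\<^esub>)"
  unfolding SD_def by simp_all

context group begin

lemma act_one [simp]: "act G \<one> f = f"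
  unfolding act_def by auto

lemma act_comp: "s \<in> carrier G \<Longrightarrow> s' \<in> carrier G \<Longrightarrow> act G s (act G s' f) = act G (s \<otimes> s') f"
  unfolding act_def by (auto simp: inv_mult_group m_assoc)

lemma act_add: "act G s (\<lambda>t. f t + g t) t = act G s f t + act G s g t"
  unfolding act_def by auto

lemma act_neg: "act G s (\<lambda>t. - f t) t = - act G s f t"
  unfolding act_def by auto

lemma act_zero [simp]: "act G s (\<lambda>t. 0) = (\<lambda>t. 0)"
  unfolding act_def by auto

lemma act_dlt: assumes "s \<in> carrier G" "u \<in> carrier G" shows "act G s (dlt u) = dlt (s \<otimes> u)"
proof
  fix t show "act G s (dlt u) t = dlt (s \<otimes> u) t"
  proof (cases "t \<in> carrier G")
    case True
    have "(inv s \<otimes> t = u) \<longleftrightarrow> (t = s \<otimes> u)"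
    proof
      assume "inv s \<otimes> t = u" then have "s \<otimes> (inv s \<otimes> t) = s \<otimes> u" by simp
      then show "t = s \<otimes> u" using assms True by (simp add: m_assoc[symmetric])
    next
      assume "t = s \<otimes> u" then show "inv s \<otimes> t = u" using assms by (simp add: m_assoc[symmetric])
    qed
    then show ?thesis using True unfolding act_def dlt_def by simp
  next
    case False
    then have "t \<noteq> u" "t \<noteq> s \<otimes> u" using assms by auto
    then show ?thesis using False unfolding act_def dlt_def by simp
  qed
qed

lemma SD_group: "group (SD G)"
proof (rule groupI)
  fix x y assume "x \<in> carrier (SD G)" "y \<in> carrier (SD G)"
  then show "x \<otimes>\<^bsub>SD G\<^esub> y \<in> carrier (SD G)" by simp
next
  show "\<one>\<^bsub>SD G\<^esub> \<in> carrier (SD G)" by simp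
next
  fix x y z assume xyz: "x \<in> carrier (SD G)" "y \<in> carrier (SD G)" "z \<in> carrier (SD G)"
  obtain f s where x: "x = (f, s)" by fastforce
  obtain f' s' where y: "y = (f', s')" by fastforce
  obtain f'' s'' where z: "z = (f'', s'')" by fastforce
  have c: "s \<in> carrier G" "s' \<in> carrier G" "s'' \<in> carrier G" using xyz x y z by auto
  have "(\<lambda>t. f t + act G s f' t + act G (s \<otimes> s') f'' t) =
        (\<lambda>t. f t + act G s (\<lambda>t. f' t + act G s' f'' t) t)"
    using c by (simp add: act_add act_comp add.assoc)
  then show "x \<otimes>\<^bsub>SD G\<^esub> y \<otimes>\<^bsub>SD G\<^esub> z = x \<otimes>\<^bsub>SD G\<^esub> (y \<otimes>\<^bsub>SD G\<^esub> z)"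
    using x y z c by (simp add: m_assoc add.assoc)
next
  fix x assume "x \<in> carrier (SD G)"
  then show "\<one>\<^bsub>SD G\<^esub> \<otimes>\<^bsub>SD G\<^esub> x = x" by (cases x) simp
next
  fix x assume xc: "x \<in> carrier (SD G)"
  obtain f s where x: "x = (f, s)" by fastforce
  have s: "s \<in> carrier G" using xc x by simp
  let ?y = "(\<lambda>t. - act G (inv s) f t, inv s)"
  have "?y \<otimes>\<^bsub>SD G\<^esub> x = \<one>\<^bsub>SD G\<^esub>" using x s by simp
  moreover have "?y \<in> carrier (SD G)" using s by simp
  ultimately show "\<exists>y\<in>carrier (SD G). y \<otimes>\<^bsub>SD G\<^esub> x = \<one>\<^bsub>SD G\<^esub>" by blast
qed

lemma SD_inv1: assumes "snd p = \<one>" shows "inv\<^bsub>SD G\<^esub> p = (\<lambda>t. - fst p t, \<one>)"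
proof -
  interpret SDG: group "SD G" by (rule SD_group)
  have "(\<lambda>t. - fst p t, \<one>) \<otimes>\<^bsub>SD G\<^esub> p = \<one>\<^bsub>SD G\<^esub>" using assms by simp
  moreover have "p \<in> carrier (SD G)" "(\<lambda>t. - fst p t, \<one>) \<in> carrier (SD G)" using assms by simp_all
  ultimately show ?thesis using SDG.inv_equality by blast
qed

end

locale fpq = fprod N G H for N (structure) and G H +
  fixes K assumes nK: "K \<lhd> N" and dK: "derived N K = K"
begin

definition S where "S = N Mod K"
definition q where "q x = K #> x"

lemma S_group: "group S" unfolding S_def using nK by (rule normal.factorgroup_is_group)

lemma S_one: "\<one>\<^bsub>S\<^esub> = K" by (simp add: S_def)

lemma q_hom: "q \<in> hom N S" using normal.r_coset_hom_Mod[OF nK] unfolding q_def S_def by simp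

lemma q_gh: "group_hom N S q"
  using q_hom S_group by (simp add: group_hom_def group_hom_axioms_def is_group)

lemma K_sub: "subgroup K N" using nK normal_def by blast

lemma q_one_iff: "x \<in> carrier N \<Longrightarrow> q x = \<one>\<^bsub>S\<^esub> \<longleftrightarrow> x \<in> K"
  unfolding q_def S_one using coset_join1[of K x] coset_join2[of x K] K_sub by auto

lemma q_c: "x \<in> carrier N \<Longrightarrow> q x \<in> carrier S"
  using q_hom unfolding hom_def by auto

lemma q_mult: "x \<in> carrier N \<Longrightarrow> y \<in> carrier N \<Longrightarrow> q (x \<otimes> y) = q x \<otimes>\<^bsub>S\<^esub> q y"
  using q_hom unfolding hom_def by auto

lemma q_surj: "q ` carrier N = carrier S"
  unfolding q_def S_def using carrier_FactGroup by auto

interpretation SG: group S by (rule S_group)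

definition phiG where "phiG g = ((\<lambda>_. 0::int), q g)"
definition psiH where "psiH h = ((\<lambda>t. dlt (q h) t - dlt \<one>\<^bsub>S\<^esub> t), q h)"

lemma exists_Phi: "\<exists>\<Phi> \<in> hom N (SD S). (\<forall>g\<in>G. \<Phi> g = phiG g) \<and> (\<forall>h\<in>H. \<Phi> h = psiH h)"
proof (rule univ)
  show "group (SD S)" by (rule SG.SD_group)
  show "phiG x \<in> carrier (SD S)" if "x \<in> G" for x using that G_carr q_c by (auto simp: phiG_def)
  show "psiH x \<in> carrier (SD S)" if "x \<in> H" for x using that H_carr q_c by (auto simp: psiH_def)
  show "phiG (x \<otimes> y) = phiG x \<otimes>\<^bsub>SD S\<^esub> phiG y" if "x \<in> G" "y \<in> G" for x y
    using that G_carr q_mult by (auto simp: phiG_def)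
  show "psiH (x \<otimes> y) = psiH x \<otimes>\<^bsub>SD S\<^esub> psiH y" if "x \<in> H" "y \<in> H" for x y
  proof -
    have xc: "x \<in> carrier N" "y \<in> carrier N" using that H_carr by auto
    have qc: "q x \<in> carrier S" "q y \<in> carrier S" using xc q_c by auto
    have a: "act S (q x) (\<lambda>t. dlt (q y) t - dlt \<one>\<^bsub>S\<^esub> t) t = dlt (q x \<otimes>\<^bsub>S\<^esub> q y) t - dlt (q x) t" for t
    proof -
      have "act S (q x) (\<lambda>t. dlt (q y) t - dlt \<one>\<^bsub>S\<^esub> t) t = act S (q x) (dlt (q y)) t + act S (q x) (\<lambda>t. - dlt \<one>\<^bsub>S\<^esub> t) t"
        using SG.act_add[of "q x" "dlt (q y)" "\<lambda>t. - dlt \<one>\<^bsub>S\<^esub> t" t] by simp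
      also have "\<dots> = dlt (q x \<otimes>\<^bsub>S\<^esub> q y) t - dlt (q x) t"
      proof -
        have "act S (q x) (dlt \<one>\<^bsub>S\<^esub>) = dlt (q x)" using SG.act_dlt[of "q x" "\<one>\<^bsub>S\<^esub>"] qc by simp
        then show ?thesis using SG.act_neg[of "q x" "dlt \<one>\<^bsub>S\<^esub>" t] SG.act_dlt[of "q x" "q y"] qc by simp
      qed
      finally show ?thesis .
    qed
    show ?thesis using a q_mult[OF xc] by (auto simp: psiH_def)
  qed
qed

lemma snd_hom: "(\<lambda>p. snd p) \<in> hom (SD S) S"
  by (rule homI) auto

lemma K_img:
  assumes Phi: "\<Phi> \<in> hom N (SD S)" and sq: "\<And>x. x \<in> carrier N \<Longrightarrow> snd (\<Phi> x) = q x"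
  and k: "k \<in> K" shows "\<Phi> k = \<one>\<^bsub>SD S\<^esub>"
proof -
  interpret SDG: group "SD S" by (rule SG.SD_group)
  interpret ph: group_hom N "SD S" \<Phi> using Phi by (simp add: group_hom_def group_hom_axioms_def is_group SDG.is_group)
  have Kc: "K \<subseteq> carrier N" using K_sub subgroup.subset by blast
  have A: "snd p = \<one>\<^bsub>S\<^esub>" if "p \<in> \<Phi> ` K" for p
    using that sq q_one_iff Kc by auto
  have "derived_set (SD S) (\<Phi> ` K) \<subseteq> {\<one>\<^bsub>SD S\<^esub>}"
  proof
    fix z assume "z \<in> derived_set (SD S) (\<Phi> ` K)"
    then obtain a b where ab: "a \<in> \<Phi> ` K" "b \<in> \<Phi> ` K"
      and z: "z = a \<otimes>\<^bsub>SD S\<^esub> b \<otimes>\<^bsub>SD S\<^esub> inv\<^bsub>SD S\<^esub> a \<otimes>\<^bsub>SD S\<^esub> inv\<^bsub>SD S\<^esub> b" by blast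
    have sa: "snd a = \<one>\<^bsub>S\<^esub>" "snd b = \<one>\<^bsub>S\<^esub>" using A ab by auto
    have ia: "inv\<^bsub>SD S\<^esub> a = (\<lambda>t. - fst a t, \<one>\<^bsub>S\<^esub>)" "inv\<^bsub>SD S\<^esub> b = (\<lambda>t. - fst b t, \<one>\<^bsub>S\<^esub>)"
      using SG.SD_inv1 sa by auto
    have "fst a \<in> UNIV" by simp
    show "z \<in> {\<one>\<^bsub>SD S\<^esub>}" using z ia sa by (simp add: SG.act_neg)
  qed
  then have "derived (SD S) (\<Phi> ` K) \<subseteq> {\<one>\<^bsub>SD S\<^esub>}"
    unfolding derived_def using SDG.mono_generate SDG.generate_one by (metis (no_types, lifting) SDG.generate_empty subset_singleton_iff)
  moreover have "derived (SD S) (\<Phi> ` K) = \<Phi> ` K" using ph.derived_img[OF Kc] dK by simp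
  ultimately show ?thesis using k by auto
qed

end

context fpq begin

interpretation SG: group S by (rule S_group)

declare SD_simps(2) [simp del]

definition fac :: "bool \<Rightarrow> 'a set set" where "fac b = (if b then q ` G else q ` H)"
definition pr :: "bool \<times> 'a set \<Rightarrow> ('a set \<Rightarrow> int) \<times> 'a set" where
  "pr p = (if fst p then ((\<lambda>_. 0), snd p) else ((\<lambda>t. dlt (snd p) t - dlt \<one>\<^bsub>S\<^esub> t), snd p))"
definition sprod :: "'a set list \<Rightarrow> 'a set" where "sprod ys = foldr (\<otimes>\<^bsub>S\<^esub>) ys \<one>\<^bsub>S\<^esub>"
definition trel :: "(bool \<times> 'a set) list \<Rightarrow> bool" where
  "trel ys \<longleftrightarrow> ys \<noteq> [] \<and> (\<forall>p\<in>set ys. snd p \<in> fac (fst p) \<and> snd p \<noteq> \<one>\<^bsub>S\<^esub>) \<and>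
     successively (\<lambda>a b. fst a \<noteq> fst b) ys \<and> sprod (map snd ys) = \<one>\<^bsub>S\<^esub>"

fun chain :: "'a set \<Rightarrow> (bool \<times> 'a set) list \<Rightarrow> ('a set \<Rightarrow> int)" where
  "chain s [] = (\<lambda>t. 0)"
| "chain s (p # r) = (if fst p then chain (s \<otimes>\<^bsub>S\<^esub> snd p) r
     else (\<lambda>t. dlt (s \<otimes>\<^bsub>S\<^esub> snd p) t - dlt s t + chain (s \<otimes>\<^bsub>S\<^esub> snd p) r t))"

lemma sprod_closed: "set ys \<subseteq> carrier S \<Longrightarrow> sprod ys \<in> carrier S"
  unfolding sprod_def by (induction ys) auto

lemma sprod_Cons: "sprod (y # ys) = y \<otimes>\<^bsub>S\<^esub> sprod ys" unfolding sprod_def by simp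
lemma sprod_Nil: "sprod [] = \<one>\<^bsub>S\<^esub>" unfolding sprod_def by simp

lemma fac_c: "y \<in> fac b \<Longrightarrow> y \<in> carrier S"
  unfolding fac_def using q_c G_carr H_carr by (auto split: if_splits)

lemma P_chain:
  assumes "set (map snd ys) \<subseteq> carrier S" "s \<in> carrier S"
  shows "act S s (fst (foldr (\<otimes>\<^bsub>SD S\<^esub>) (map pr ys) \<one>\<^bsub>SD S\<^esub>)) t = chain s ys t
         \<and> snd (foldr (\<otimes>\<^bsub>SD S\<^esub>) (map pr ys) \<one>\<^bsub>SD S\<^esub>) = sprod (map snd ys)"
  using assms
proof (induction ys arbitrary: s t)
  case Nil then show ?case by (simp add: sprod_Nil)
next
  case (Cons p r)
  let ?P = "foldr (\<otimes>\<^bsub>SD S\<^esub>) (map pr r) \<one>\<^bsub>SD S\<^esub>"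
  have y: "snd p \<in> carrier S" and rc: "set (map snd r) \<subseteq> carrier S" using Cons.prems by auto
  have sy: "s \<otimes>\<^bsub>S\<^esub> snd p \<in> carrier S" using y Cons.prems by simp
  have IH: "\<And>t. act S (s \<otimes>\<^bsub>S\<^esub> snd p) (fst ?P) t = chain (s \<otimes>\<^bsub>S\<^esub> snd p) r t" "snd ?P = sprod (map snd r)"
    using Cons.IH[OF rc sy] by auto
  have e: "foldr (\<otimes>\<^bsub>SD S\<^esub>) (map pr (p # r)) \<one>\<^bsub>SD S\<^esub> = pr p \<otimes>\<^bsub>SD S\<^esub> ?P" by simp
  have sp: "snd (pr p) = snd p" unfolding pr_def by simp
  have fst_e: "act S s (fst (pr p \<otimes>\<^bsub>SD S\<^esub> ?P)) t = act S s (fst (pr p)) t + act S (s \<otimes>\<^bsub>S\<^esub> snd p) (fst ?P) t"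
    using SG.act_add[of s "fst (pr p)" "act S (snd p) (fst ?P)" t] SG.act_comp[OF Cons.prems(2) y] sp
    by (simp add: SD_simps(2))
  have first: "act S s (fst (pr p)) t = (if fst p then 0 else dlt (s \<otimes>\<^bsub>S\<^esub> snd p) t - dlt s t)"
  proof (cases "fst p")
    case True then show ?thesis unfolding pr_def by simp
  next
    case False
    have "act S s (\<lambda>t. dlt (snd p) t - dlt \<one>\<^bsub>S\<^esub> t) t = act S s (dlt (snd p)) t + act S s (\<lambda>t. - dlt \<one>\<^bsub>S\<^esub> t) t"
      using SG.act_add[of s "dlt (snd p)" "\<lambda>t. - dlt \<one>\<^bsub>S\<^esub> t" t] by simp
    also have "\<dots> = dlt (s \<otimes>\<^bsub>S\<^esub> snd p) t - dlt s t"
    proof -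
      have "act S s (dlt \<one>\<^bsub>S\<^esub>) = dlt s" using SG.act_dlt[of s "\<one>\<^bsub>S\<^esub>"] Cons.prems(2) by simp
      then show ?thesis using SG.act_neg[of s "dlt \<one>\<^bsub>S\<^esub>" t] SG.act_dlt[of s "snd p"] y Cons.prems(2) by simp
    qed
    finally show ?thesis using False unfolding pr_def by simp
  qed
  have "snd (pr p \<otimes>\<^bsub>SD S\<^esub> ?P) = snd p \<otimes>\<^bsub>S\<^esub> snd ?P" using sp by (simp add: SD_simps(2))
  then show ?case using e fst_e first IH sp by (simp add: sprod_Cons)
qed

lemma chain_zero:
  assumes "set (map snd r) \<subseteq> carrier S" "s \<in> carrier S"
    "\<And>k. k \<le> length r \<Longrightarrow> s \<otimes>\<^bsub>S\<^esub> sprod (take k (map snd r)) \<noteq> t"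
  shows "chain s r t = 0"
  using assms
proof (induction r arbitrary: s)
  case Nil then show ?case by simp
next
  case (Cons p r)
  have y: "snd p \<in> carrier S" and rc: "set (map snd r) \<subseteq> carrier S" using Cons.prems by auto
  have sy: "s \<otimes>\<^bsub>S\<^esub> snd p \<in> carrier S" using y Cons.prems by simp
  have h0: "s \<noteq> t" using Cons.prems(3)[of 0] Cons.prems(2) by (simp add: sprod_Nil)
  have h1: "s \<otimes>\<^bsub>S\<^esub> snd p \<noteq> t" using Cons.prems(3)[of 1] Cons.prems(2) y by (simp add: sprod_Cons sprod_Nil)
  have hk: "(s \<otimes>\<^bsub>S\<^esub> snd p) \<otimes>\<^bsub>S\<^esub> sprod (take k (map snd r)) \<noteq> t" if "k \<le> length r" for k
  proof -
    have "sprod (take k (map snd r)) \<in> carrier S" using rc sprod_closed[of "take k (map snd r)"]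
      by (meson order_trans set_take_subset)
    then have "(s \<otimes>\<^bsub>S\<^esub> snd p) \<otimes>\<^bsub>S\<^esub> sprod (take k (map snd r)) = s \<otimes>\<^bsub>S\<^esub> sprod (take (Suc k) (map snd (p # r)))"
      using y Cons.prems(2) by (simp add: sprod_Cons SG.m_assoc)
    then show ?thesis using Cons.prems(3)[of "Suc k"] that by simp
  qed
  have "chain (s \<otimes>\<^bsub>S\<^esub> snd p) r t = 0" using Cons.IH[OF rc sy] hk by blast
  then show ?case using h0 h1 by (simp add: dlt_def)
qed

lemma lift_list:
  assumes "\<forall>p\<in>set ys. \<exists>x. R p x" shows "\<exists>xs. list_all2 R ys xs"
  using assms
proof (induction ys)
  case Nil then show ?case by auto
next
  case (Cons p ys)
  then obtain xs where "list_all2 R ys xs" by auto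
  moreover obtain x where "R p x" using Cons.prems by auto
  ultimately have "list_all2 R (p # ys) (x # xs)" by simp
  then show ?case by blast
qed

lemma successively_take: "successively P xs \<Longrightarrow> successively P (take k xs)"
  by (metis append_take_drop_id successively_append_iff)

end

lemma hom_wprod:
  assumes "group N" "group T" "f \<in> hom N T" "set xs \<subseteq> carrier N"
  shows "f (foldr (\<otimes>\<^bsub>N\<^esub>) xs \<one>\<^bsub>N\<^esub>) = foldr (\<otimes>\<^bsub>T\<^esub>) (map f xs) \<one>\<^bsub>T\<^esub>"
proof -
  interpret gh: group_hom N T f using assms by (simp add: group_hom_def group_hom_axioms_def)
  show ?thesis using assms(4)
  proof (induction xs)
    case Nil then show ?case by simp
  next
    case (Cons a xs)
    have "foldr (\<otimes>\<^bsub>N\<^esub>) xs \<one>\<^bsub>N\<^esub> \<in> carrier N" using Cons.prems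
      by (induction xs) auto
    then show ?case using Cons by simp
  qed
qed

lemma list_all2_map_eq:
  "list_all2 R ys xs \<Longrightarrow> (\<And>p x. R p x \<Longrightarrow> f x = g p) \<Longrightarrow> map f xs = map g ys"
  by (induction rule: list_all2_induct) auto

context fpq begin

interpretation SG: group S by (rule S_group)
declare SD_simps(2) [simp del]

lemma no_trel: "\<not> trel ys0"
proof
  assume "trel ys0"
  then have "\<exists>n. \<exists>ys. trel ys \<and> length ys = n" by blast
  then obtain n where n: "\<exists>ys. trel ys \<and> length ys = n"
    and nmin: "\<And>m. m < n \<Longrightarrow> \<not> (\<exists>ys. trel ys \<and> length ys = m)"
    using exists_least_iff[of "\<lambda>n. \<exists>ys. trel ys \<and> length ys = n"] by blast
  then obtain ys where tr: "trel ys" and ln: "length ys = n" by blast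
  have min: "length ys \<le> length zs" if "trel zs" for zs using nmin[of "length zs"] ln that by force
  obtain p1 rest where ys: "ys = p1 # rest" using tr trel_def by (cases ys) auto
  have valid: "\<forall>p\<in>set ys. snd p \<in> fac (fst p) \<and> snd p \<noteq> \<one>\<^bsub>S\<^esub>"
    and succ: "successively (\<lambda>a b. fst a \<noteq> fst b) ys" and pr1: "sprod (map snd ys) = \<one>\<^bsub>S\<^esub>"
    using tr trel_def by auto
  have ysc: "set (map snd ys) \<subseteq> carrier S" using valid fac_c by auto
  define y1 where "y1 = snd p1"
  have y1c: "y1 \<in> carrier S" and y1n: "y1 \<noteq> \<one>\<^bsub>S\<^esub>" using valid ys y1_def fac_c by auto
  have restc: "set (map snd rest) \<subseteq> carrier S" using ysc ys by auto
  have succr: "successively (\<lambda>a b. fst a \<noteq> fst b) rest" using succ ys by (auto simp: successively_Cons)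
  have nz: "sprod (take k (map snd rest)) \<noteq> \<one>\<^bsub>S\<^esub>" if k: "1 \<le> k" "k \<le> length rest" for k
  proof
    assume eq: "sprod (take k (map snd rest)) = \<one>\<^bsub>S\<^esub>"
    have "trel (take k rest)" unfolding trel_def
    proof (intro conjI)
      show "take k rest \<noteq> []" using k by auto
      show "\<forall>p\<in>set (take k rest). snd p \<in> fac (fst p) \<and> snd p \<noteq> \<one>\<^bsub>S\<^esub>"
        using valid ys set_take_subset[of k rest] by auto
      show "successively (\<lambda>a b. fst a \<noteq> fst b) (take k rest)" using succr successively_take by blast
      show "sprod (map snd (take k rest)) = \<one>\<^bsub>S\<^esub>" using eq by (simp add: take_map)
    qed
    then have "length ys \<le> length (take k rest)" using min by blast
    then show False using k ys by simp
  qed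
  have "rest \<noteq> []"
  proof
    assume "rest = []"
    then have "sprod (map snd ys) = y1" using ys y1_def y1c by (simp add: sprod_Cons sprod_Nil)
    then show False using pr1 y1n by simp
  qed
  then obtain p2 r where rest: "rest = p2 # r" by (cases rest) auto
  define y2 where "y2 = snd p2"
  have y2c: "y2 \<in> carrier S" and y2n: "y2 \<noteq> \<one>\<^bsub>S\<^esub>" using valid ys rest y2_def fac_c by auto
  have f12: "fst p1 \<noteq> fst p2" using succ ys rest by simp
  have rc: "set (map snd r) \<subseteq> carrier S" using restc rest by auto
  obtain \<Phi> where Phi: "\<Phi> \<in> hom N (SD S)" "\<forall>g\<in>G. \<Phi> g = phiG g" "\<forall>h\<in>H. \<Phi> h = psiH h"
    using exists_Phi by blast
  have sqh: "(\<lambda>x. snd (\<Phi> x)) \<in> hom N S"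
  proof (rule homI)
    fix x assume "x \<in> carrier N" then show "snd (\<Phi> x) \<in> carrier S" using Phi(1) unfolding hom_def by auto
  next
    fix x y assume "x \<in> carrier N" "y \<in> carrier N"
    then show "snd (\<Phi> (x \<otimes> y)) = snd (\<Phi> x) \<otimes>\<^bsub>S\<^esub> snd (\<Phi> y)"
      using Phi(1) unfolding hom_def by (simp add: SD_simps(2))
  qed
  have sq: "snd (\<Phi> x) = q x" if "x \<in> carrier N" for x
  proof (rule hom_agree[OF S_group sqh q_hom _ that])
    fix c assume "c \<in> G \<union> H"
    then show "snd (\<Phi> c) = q c" using Phi by (auto simp: phiG_def psiH_def)
  qed
  define R where "R p x \<longleftrightarrow> x \<in> (if fst p then G else H) \<and> q x = snd p" for p x
  have "\<forall>p\<in>set ys. \<exists>x. R p x"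
  proof
    fix p assume "p \<in> set ys"
    then have "snd p \<in> fac (fst p)" using valid by auto
    then show "\<exists>x. R p x" unfolding R_def fac_def by (auto split: if_splits)
  qed
  then obtain xs where xs: "list_all2 R ys xs" using lift_list by blast
  have xsc: "set xs \<subseteq> carrier N"
  proof
    fix x assume "x \<in> set xs"
    then obtain i where i: "i < length xs" "x = xs ! i" by (auto simp: in_set_conv_nth)
    then have "R (ys ! i) x" using xs by (simp add: list_all2_conv_all_nth)
    then obtain p where "R p x" by blast
    then show "x \<in> carrier N" unfolding R_def using G_carr H_carr by (auto split: if_splits)
  qed
  have mPhi: "map \<Phi> xs = map pr ys"
  proof (rule list_all2_map_eq[OF xs])
    fix p x assume "R p x"
    then show "\<Phi> x = pr p" using Phi unfolding R_def pr_def phiG_def psiH_def by (auto split: if_splits)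
  qed
  have mq: "map q xs = map snd ys" by (rule list_all2_map_eq[OF xs]) (simp add: R_def)
  have wc: "wprod xs \<in> carrier N" using xsc wprod_closed by auto
  have "q (wprod xs) = sprod (map snd ys)"
    using hom_wprod[OF is_group S_group q_hom xsc] mq by (simp add: sprod_def)
  then have "wprod xs \<in> K" using pr1 q_one_iff[OF wc] by simp
  then have Pw: "\<Phi> (wprod xs) = \<one>\<^bsub>SD S\<^esub>" using K_img[OF Phi(1)] sq by blast
  have "\<Phi> (wprod xs) = foldr (\<otimes>\<^bsub>SD S\<^esub>) (map pr ys) \<one>\<^bsub>SD S\<^esub>"
    using hom_wprod[OF is_group SG.SD_group Phi(1) xsc] mPhi by simp
  then have F: "foldr (\<otimes>\<^bsub>SD S\<^esub>) (map pr ys) \<one>\<^bsub>SD S\<^esub> = ((\<lambda>_. 0), \<one>\<^bsub>S\<^esub>)"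
    using Pw by simp
  have ch0: "chain \<one>\<^bsub>S\<^esub> ys t = 0" for t
  proof -
    have "act S \<one>\<^bsub>S\<^esub> (fst (foldr (\<otimes>\<^bsub>SD S\<^esub>) (map pr ys) \<one>\<^bsub>SD S\<^esub>)) t = chain \<one>\<^bsub>S\<^esub> ys t"
      using P_chain[OF ysc SG.one_closed, of t] by blast
    then show ?thesis unfolding F by simp
  qed
  have cz: "chain (y1 \<otimes>\<^bsub>S\<^esub> y2) r y1 = 0"
  proof (rule chain_zero[OF rc])
    show "y1 \<otimes>\<^bsub>S\<^esub> y2 \<in> carrier S" using y1c y2c by simp
    fix k assume k: "k \<le> length r"
    have sc: "sprod (take k (map snd r)) \<in> carrier S"
      using rc sprod_closed[of "take k (map snd r)"] by (meson order_trans set_take_subset)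
    have e: "y1 \<otimes>\<^bsub>S\<^esub> y2 \<otimes>\<^bsub>S\<^esub> sprod (take k (map snd r)) = y1 \<otimes>\<^bsub>S\<^esub> sprod (take (Suc k) (map snd rest))"
      using rest y2_def y1c y2c sc by (simp add: sprod_Cons SG.m_assoc)
    have "sprod (take (Suc k) (map snd rest)) \<noteq> \<one>\<^bsub>S\<^esub>" using nz[of "Suc k"] k rest by simp
    moreover have "sprod (take (Suc k) (map snd rest)) \<in> carrier S"
      using restc sprod_closed[of "take (Suc k) (map snd rest)"] by (meson order_trans set_take_subset)
    ultimately show "y1 \<otimes>\<^bsub>S\<^esub> y2 \<otimes>\<^bsub>S\<^esub> sprod (take k (map snd r)) \<noteq> y1" using e y1c by simp
  qed
  have y12: "y1 \<otimes>\<^bsub>S\<^esub> y2 \<noteq> y1" using y1c y2c y2n by simp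
  show False
  proof (cases "fst p1")
    case True
    then have "\<not> fst p2" using f12 by simp
    then have "chain \<one>\<^bsub>S\<^esub> ys y1 = dlt (y1 \<otimes>\<^bsub>S\<^esub> y2) y1 - dlt y1 y1 + chain (y1 \<otimes>\<^bsub>S\<^esub> y2) r y1"
      using True ys rest y1_def y2_def y1c by simp
    then have "chain \<one>\<^bsub>S\<^esub> ys y1 = -1" using cz y12 by (simp add: dlt_def)
    then show False using ch0 by simp
  next
    case False
    then have "fst p2" using f12 by simp
    then have "chain \<one>\<^bsub>S\<^esub> ys y1 = dlt y1 y1 - dlt \<one>\<^bsub>S\<^esub> y1 + chain (y1 \<otimes>\<^bsub>S\<^esub> y2) r y1"
      using False ys rest y1_def y2_def y1c by simp
    then have "chain \<one>\<^bsub>S\<^esub> ys y1 = 1" using cz y1n by (simp add: dlt_def)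
    then show False using ch0 by simp
  qed
qed

lemma quotient_free: "free_product S (q ` G) (q ` H)"
proof -
  interpret qh: group_hom N S q by (rule q_gh)
  have sG: "subgroup (q ` G) S" using qh.subgroup_img_is_subgroup[OF sgG] .
  have sH: "subgroup (q ` H) S" using qh.subgroup_img_is_subgroup[OF sgH] .
  have int: "q ` G \<inter> q ` H = {\<one>\<^bsub>S\<^esub>}"
  proof
    show "{\<one>\<^bsub>S\<^esub>} \<subseteq> q ` G \<inter> q ` H" using sG sH subgroup.one_closed by blast
    show "q ` G \<inter> q ` H \<subseteq> {\<one>\<^bsub>S\<^esub>}"
    proof
      fix c assume c: "c \<in> q ` G \<inter> q ` H"
      show "c \<in> {\<one>\<^bsub>S\<^esub>}"
      proof (rule ccontr)
        assume c1: "c \<notin> {\<one>\<^bsub>S\<^esub>}"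
        have cG: "c \<in> q ` G" and cH: "c \<in> q ` H" using c by auto
        have cc: "c \<in> carrier S" using subgroup.subset[OF sG] cG by blast
        have ic: "inv\<^bsub>S\<^esub> c \<in> q ` H" using subgroup.m_inv_closed[OF sH cH] .
        have ic1: "inv\<^bsub>S\<^esub> c \<noteq> \<one>\<^bsub>S\<^esub>" using c1 cc SG.inv_eq_1_iff by auto
        have pr: "sprod (map snd [(True, c), (False, inv\<^bsub>S\<^esub> c)]) = \<one>\<^bsub>S\<^esub>"
          using cc by (simp add: sprod_def)
        have "trel [(True, c), (False, inv\<^bsub>S\<^esub> c)]"
          unfolding trel_def using pr cG ic c1 ic1 by (simp add: fac_def)
        then show False using no_trel by blast
      qed
    qed
  qed
  have gen2: "generate S (q ` G \<union> q ` H) = carrier S"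
  proof -
    have "generate S (q ` (G \<union> H)) = q ` generate N (G \<union> H)"
      using qh.generate_img[of "G \<union> H"] G_carr H_carr by auto
    then show ?thesis using gen q_surj by (simp add: image_Un)
  qed
  have alt: "foldr (\<otimes>\<^bsub>S\<^esub>) xs \<one>\<^bsub>S\<^esub> \<noteq> \<one>\<^bsub>S\<^esub>" if aw: "alternating_word S (q ` G) (q ` H) xs" for xs
  proof
    assume p1: "foldr (\<otimes>\<^bsub>S\<^esub>) xs \<one>\<^bsub>S\<^esub> = \<one>\<^bsub>S\<^esub>"
    define ys where "ys = map (\<lambda>x. (x \<in> q ` G, x)) xs"
    have ne: "xs \<noteq> []" and sx: "set xs \<subseteq> (q ` G \<union> q ` H) - {\<one>\<^bsub>S\<^esub>}"
      and al: "\<And>i. Suc i < length xs \<Longrightarrow> \<not> (xs ! i \<in> q ` G \<and> xs ! Suc i \<in> q ` G) \<and> \<not> (xs ! i \<in> q ` H \<and> xs ! Suc i \<in> q ` H)"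
      using aw unfolding alternating_word_def by auto
    have "trel ys" unfolding trel_def
    proof (intro conjI)
      show "ys \<noteq> []" using ne ys_def by simp
      show "\<forall>p\<in>set ys. snd p \<in> fac (fst p) \<and> snd p \<noteq> \<one>\<^bsub>S\<^esub>"
        using sx unfolding ys_def fac_def by auto
      have "\<forall>i. Suc i < length ys \<longrightarrow> fst (ys ! i) \<noteq> fst (ys ! Suc i)"
      proof (intro allI impI)
        fix i assume i0: "Suc i < length ys"
        then have i: "Suc i < length xs" using ys_def by simp
        have "xs ! i \<in> set xs" "xs ! Suc i \<in> set xs" using i by simp_all
        then have "xs ! i \<in> q ` G \<union> q ` H" "xs ! Suc i \<in> q ` G \<union> q ` H" using sx by blast+
        then have "(xs ! i \<in> q ` G) \<noteq> (xs ! Suc i \<in> q ` G)" using al[OF i] by blast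
        then show "fst (ys ! i) \<noteq> fst (ys ! Suc i)" using i unfolding ys_def by simp
      qed
      then show "successively (\<lambda>a b. fst a \<noteq> fst b) ys" by (simp add: successively_conv_nth)
      show "sprod (map snd ys) = \<one>\<^bsub>S\<^esub>" using p1 unfolding ys_def sprod_def by (simp add: comp_def)
    qed
    then show False using no_trel by blast
  qed
  show ?thesis unfolding free_product_def using sG sH int gen2 alt by blast
qed

end

context fprod begin

lemma rc1: "c \<in> LL \<Longrightarrow> (w = [] \<or> \<not> same c (hd w)) \<Longrightarrow> rcons c w = c # w"
  unfolding rcons_def LL_def by (cases w) auto
lemma rc2: "c \<in> LL \<Longrightarrow> same c d \<Longrightarrow> c \<otimes> d \<noteq> \<one> \<Longrightarrow> rcons c (d # r) = (c \<otimes> d) # r"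
  unfolding rcons_def LL_def by auto
lemma rc3: "c \<in> LL \<Longrightarrow> same c d \<Longrightarrow> c \<otimes> d = \<one> \<Longrightarrow> rcons c (d # r) = r"
  unfolding rcons_def LL_def by auto

lemma rinv_eq: assumes "x \<in> carrier N" "y \<in> carrier N" "x \<otimes> y = \<one>" shows "y = inv x"
proof -
  have "inv x \<otimes> (x \<otimes> y) = y" using assms(1,2) by (simp add: m_assoc[symmetric])
  then show ?thesis using assms by simp
qed

lemma same_refl: "c \<in> LL \<Longrightarrow> same c c" unfolding same_def LL_def by auto

lemma LL_GH': "c \<in> LL \<Longrightarrow> c \<in> G \<union> H" unfolding LL_def by auto

lemma nf_LL: "x \<in> carrier N \<Longrightarrow> nf x = e # t \<Longrightarrow> e \<in> LL"
  using nf(1)[of x] by (simp add: red_Cons)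

lemma ping:
  assumes L: "p \<in> LL" "q' \<in> LL" "r \<in> LL" "u \<in> LL"
    and st: "\<not> same p q'" "same p r" "same q' u"
    and s: "s \<in> carrier N" and ns: "\<not> (\<exists>t. nf s = inv u # inv r # t)"
  shows "\<exists>t. nf (p \<otimes> (q' \<otimes> (r \<otimes> (u \<otimes> s)))) = p # q' # t"
proof -
  have c: "p \<in> carrier N" "q' \<in> carrier N" "r \<in> carrier N" "u \<in> carrier N" using L LL_carr by auto
  have GH: "p \<in> G \<union> H" "q' \<in> G \<union> H" "r \<in> G \<union> H" "u \<in> G \<union> H" using L LL_GH' by auto
  have nru: "\<not> same r u"
    using same_trans[OF L(1) L(3) L(2) st(2)] same_trans[OF L(2) L(4) L(3) st(3)] st(1) same_sym by blast
  have nqr: "\<not> same q' r" using same_trans[OF L(1) L(3) L(2) st(2)] st(1) same_sym by blast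
  define w where "w = nf s"
  define w1 where "w1 = nf (u \<otimes> s)"
  have w1: "w1 = rcons u w" using nf_rcons[OF GH(4) s] w1_def w_def by simp
  have us: "u \<otimes> s \<in> carrier N" using c s by simp
  have E: "r \<otimes> e \<noteq> \<one>" if "w1 = e # t" "same r e" for e t
  proof (cases w)
    case Nil
    then have "w1 = [u]" using w1 rc1[OF L(4)] by simp
    then show ?thesis using that nru by simp
  next
    case (Cons d t')
    have dL: "d \<in> LL" using nf_LL[OF s] Cons w_def by simp
    show ?thesis
    proof (cases "same u d")
      case False
      then have "w1 = u # d # t'" using w1 rc1[OF L(4)] Cons by simp
      then show ?thesis using that nru by simp
    next
      case True
      show ?thesis
      proof (cases "u \<otimes> d = \<one>")
        case False
        then have "w1 = (u \<otimes> d) # t'" using w1 rc2[OF L(4) True] Cons by simp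
        then have eu: "e = u \<otimes> d" using that by simp
        have udL: "u \<otimes> d \<in> LL" using same_mult_GH(1)[OF GH(4) LL_GH'[OF dL] True] False LL_GH by auto
        have sud: "same (u \<otimes> d) d" using same_mult_GH(2)[OF GH(4) LL_GH'[OF dL] True] False L(4) LL_def by auto
        have "\<not> same r (u \<otimes> d)"
        proof
          assume "same r (u \<otimes> d)"
          then have "same (u \<otimes> d) r" using same_sym by blast
          then have "same d r" using same_trans[OF udL dL L(3) sud] by blast
          then have "same u r" using same_trans[OF L(4) dL L(3) True] by blast
          then show False using nru same_sym by blast
        qed
        then show ?thesis using that eu by simp
      next
        case True
        then have "w1 = t'" using w1 rc3[OF L(4) \<open>same u d\<close>] Cons by simp
        then have t': "t' = e # t" using that by simp
        have "d = inv u" using rinv_eq[OF c(4) LL_carr[OF dL] True] .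
        then have "e \<noteq> inv r" using ns Cons t' w_def by auto
        moreover have "e \<in> carrier N" using nf_LL[OF us] that w1_def LL_carr by auto
        ultimately show ?thesis using c(3) rinv_eq by blast
      qed
    qed
  qed
  define w2 where "w2 = nf (r \<otimes> (u \<otimes> s))"
  have w2: "w2 = rcons r w1" using nf_rcons[OF GH(3) us] w2_def w1_def by simp
  have C: "w2 \<noteq> [] \<and> same r (hd w2)"
  proof (cases w1)
    case Nil
    then show ?thesis using w2 rc1[OF L(3)] same_refl[OF L(3)] by simp
  next
    case (Cons e t)
    have eL: "e \<in> LL" using nf_LL[OF us] Cons w1_def by simp
    show ?thesis
    proof (cases "same r e")
      case False
      then show ?thesis using w2 rc1[OF L(3)] Cons same_refl[OF L(3)] by simp
    next
      case True
      have ne: "r \<otimes> e \<noteq> \<one>" using E[OF Cons True] .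
      then have "w2 = (r \<otimes> e) # t" using w2 rc2[OF L(3) True] Cons by simp
      moreover have "r \<otimes> e \<in> LL" using same_mult_GH(1)[OF GH(3) LL_GH'[OF eL] True] ne LL_GH by auto
      moreover have "same (r \<otimes> e) e" using same_mult_GH(2)[OF GH(3) LL_GH'[OF eL] True] ne L(3) LL_def by auto
      ultimately show ?thesis using same_trans[OF L(3) eL] True same_sym
        by (metis list.distinct(1) list.sel(1) same_trans eL)
    qed
  qed
  have h2L: "hd w2 \<in> LL" using C nf_LL[of "r \<otimes> (u \<otimes> s)" "hd w2" "tl w2"] c us w2_def by simp
  have rus: "r \<otimes> (u \<otimes> s) \<in> carrier N" using c us by simp
  have w3: "nf (q' \<otimes> (r \<otimes> (u \<otimes> s))) = q' # w2"
  proof -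
    have "\<not> same q' (hd w2)" using C nqr same_trans[OF L(3) h2L L(2)] same_sym by blast
    then show ?thesis using nf_rcons[OF GH(2) rus] w2_def rc1[OF L(2)] by simp
  qed
  have "nf (p \<otimes> (q' \<otimes> (r \<otimes> (u \<otimes> s)))) = p # q' # w2"
    using nf_rcons[OF GH(1)] c rus w3 rc1[OF L(1)] st(1) by simp
  then show ?thesis by blast
qed

end

context fprod begin

definition Xp where "Xp a b = {s \<in> carrier N. \<exists>t. nf s = a # b # t}"
definition Xm where "Xm a b = {s \<in> carrier N. \<exists>t. nf s = b # inv a # t}"
definition xa where "xa a b = a \<otimes> (b \<otimes> (a \<otimes> inv b))"

lemma one_notin_X: "\<one> \<notin> Xp a b" "\<one> \<notin> Xm a b"
  unfolding Xp_def Xm_def by (auto simp: nf_one)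

lemma LL_G: "a \<in> G \<Longrightarrow> a \<noteq> \<one> \<Longrightarrow> a \<in> LL" unfolding LL_def by auto
lemma LL_H: "a \<in> H \<Longrightarrow> a \<noteq> \<one> \<Longrightarrow> a \<in> LL" unfolding LL_def by auto

lemma GH_ne: "a \<in> G \<Longrightarrow> a \<noteq> \<one> \<Longrightarrow> b \<in> H \<Longrightarrow> a \<noteq> b" using GH_int by auto

lemma not_same_GH: "a \<in> G \<Longrightarrow> a \<noteq> \<one> \<Longrightarrow> b \<in> H \<Longrightarrow> b \<noteq> \<one> \<Longrightarrow> \<not> same a b"
  using GH_int unfolding same_def by auto

lemma Xp_Xm_disj: assumes "a \<in> G" "a \<noteq> \<one>" "b \<in> H" shows "Xp a b \<inter> Xm a b = {}"
  using GH_ne[OF assms] unfolding Xp_def Xm_def by auto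

lemma xa_c: assumes "a \<in> G" "b \<in> H" shows "xa a b \<in> carrier N"
proof -
  have "a \<in> carrier N" "b \<in> carrier N" using assms G_carr H_carr by auto
  then show ?thesis unfolding xa_def by simp
qed

lemma xa_inv: assumes "a \<in> G" "b \<in> H"
  shows "inv (xa a b) = b \<otimes> (inv a \<otimes> (inv b \<otimes> inv a))"
proof -
  have c: "a \<in> carrier N" "b \<in> carrier N" using assms G_carr H_carr by auto
  show ?thesis unfolding xa_def using c by (simp add: inv_mult_group m_assoc)
qed

lemma ping_plus:
  assumes a: "a \<in> G" "a \<noteq> \<one>" and b: "b \<in> H" "b \<noteq> \<one>"
    and s: "s \<in> carrier N" "s \<notin> Xm a b"
  shows "xa a b \<otimes> s \<in> Xp a b"
proof -
  have c: "a \<in> carrier N" "b \<in> carrier N" using a b G_carr H_carr by auto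
  have aL: "a \<in> LL" and bL: "b \<in> LL" using a b LL_G LL_H by auto
  have ibL: "inv b \<in> LL" using inv_LL[OF bL] .
  have sb: "same b (inv b)" using b c inv_H unfolding same_def by auto
  have ns: "\<not> (\<exists>t. nf s = inv (inv b) # inv a # t)" using s c unfolding Xm_def by auto
  obtain t where "nf (a \<otimes> (b \<otimes> (a \<otimes> (inv b \<otimes> s)))) = a # b # t"
    using ping[OF aL bL aL ibL not_same_GH[OF a b] same_refl[OF aL] sb s(1) ns] by blast
  moreover have "xa a b \<otimes> s = a \<otimes> (b \<otimes> (a \<otimes> (inv b \<otimes> s)))"
    unfolding xa_def using c s by (simp add: m_assoc)
  moreover have "xa a b \<otimes> s \<in> carrier N" using xa_c a b s by simp
  ultimately show ?thesis unfolding Xp_def by auto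
qed

lemma ping_minus:
  assumes a: "a \<in> G" "a \<noteq> \<one>" and b: "b \<in> H" "b \<noteq> \<one>"
    and s: "s \<in> carrier N" "s \<notin> Xp a b"
  shows "inv (xa a b) \<otimes> s \<in> Xm a b"
proof -
  have c: "a \<in> carrier N" "b \<in> carrier N" using a b G_carr H_carr by auto
  have aL: "a \<in> LL" and bL: "b \<in> LL" using a b LL_G LL_H by auto
  have iaL: "inv a \<in> LL" and ibL: "inv b \<in> LL" using inv_LL aL bL by auto
  have sb: "same b (inv b)" using b c inv_H unfolding same_def by auto
  have nsa: "\<not> same b (inv a)" using not_same_GH[OF a b] same_inv1[OF c(1), of b] same_sym by auto
  have ns: "\<not> (\<exists>t. nf s = inv (inv a) # inv (inv b) # t)" using s c unfolding Xp_def by auto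
  obtain t where "nf (b \<otimes> (inv a \<otimes> (inv b \<otimes> (inv a \<otimes> s)))) = b # inv a # t"
    using ping[OF bL iaL ibL iaL nsa sb same_refl[OF iaL] s(1) ns] by blast
  moreover have "inv (xa a b) \<otimes> s = b \<otimes> (inv a \<otimes> (inv b \<otimes> (inv a \<otimes> s)))"
    using xa_inv[OF a(1) b(1)] c s by (simp add: m_assoc)
  moreover have "inv (xa a b) \<otimes> s \<in> carrier N" using xa_c a b s by simp
  ultimately show ?thesis unfolding Xm_def by auto
qed

lemma pow_plus:
  assumes a: "a \<in> G" "a \<noteq> \<one>" and b: "b \<in> H" "b \<noteq> \<one>"
  shows "s \<in> carrier N \<Longrightarrow> s \<notin> Xm a b \<Longrightarrow> xa a b [^] (Suc n) \<otimes> s \<in> Xp a b"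
proof (induction n arbitrary: s)
  case 0
  then show ?case using ping_plus[OF a b] xa_c[OF a(1) b(1)] by simp
next
  case (Suc n)
  have xc: "xa a b \<in> carrier N" using xa_c a b by simp
  have "xa a b \<otimes> s \<in> Xp a b" using ping_plus[OF a b Suc.prems] .
  then have "xa a b \<otimes> s \<notin> Xm a b" using Xp_Xm_disj[OF a b(1)] by blast
  then have "xa a b [^] Suc n \<otimes> (xa a b \<otimes> s) \<in> Xp a b" using Suc.IH xc Suc.prems(1) by simp
  moreover have "xa a b [^] Suc (Suc n) \<otimes> s = xa a b [^] Suc n \<otimes> (xa a b \<otimes> s)"
    using xc Suc.prems(1) by (simp add: m_assoc)
  ultimately show ?case by simp
qed

lemma pow_minus:
  assumes a: "a \<in> G" "a \<noteq> \<one>" and b: "b \<in> H" "b \<noteq> \<one>"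
  shows "s \<in> carrier N \<Longrightarrow> s \<notin> Xp a b \<Longrightarrow> inv (xa a b) [^] (Suc n) \<otimes> s \<in> Xm a b"
proof (induction n arbitrary: s)
  case 0
  then show ?case using ping_minus[OF a b] xa_c[OF a(1) b(1)] by simp
next
  case (Suc n)
  have xc: "inv (xa a b) \<in> carrier N" using xa_c a b by simp
  have "inv (xa a b) \<otimes> s \<in> Xm a b" using ping_minus[OF a b Suc.prems] .
  then have "inv (xa a b) \<otimes> s \<notin> Xp a b" using Xp_Xm_disj[OF a b(1)] by blast
  then have "inv (xa a b) [^] Suc n \<otimes> (inv (xa a b) \<otimes> s) \<in> Xm a b" using Suc.IH xc Suc.prems(1) by simp
  moreover have "inv (xa a b) [^] Suc (Suc n) \<otimes> s = inv (xa a b) [^] Suc n \<otimes> (inv (xa a b) \<otimes> s)"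
    using xc Suc.prems(1) by (simp add: m_assoc)
  ultimately show ?case by simp
qed

lemma ipow:
  assumes a: "a \<in> G" "a \<noteq> \<one>" and b: "b \<in> H" "b \<noteq> \<one>" and i: "i \<noteq> (0::int)"
    and s: "s \<in> carrier N" "s \<notin> Xp a b \<union> Xm a b"
  shows "xa a b [^] i \<otimes> s \<in> Xp a b \<union> Xm a b"
proof (cases "i > 0")
  case True
  define n where "n = nat i - 1"
  have n: "i = int (Suc n)" using True n_def by simp
  have "xa a b [^] i = xa a b [^] (Suc n)" unfolding n by (rule int_pow_int)
  then show ?thesis using pow_plus[OF a b s(1)] s(2) by auto
next
  case False
  then have "i < 0" using i by simp
  define n where "n = nat (- i) - 1"
  have n: "i = - int (Suc n)" using \<open>i < 0\<close> n_def by simp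
  have xc: "xa a b \<in> carrier N" using xa_c a b by simp
  have "xa a b [^] i = inv (xa a b [^] (Suc n))" unfolding n by (rule int_pow_neg_int[OF xc])
  also have "\<dots> = inv (xa a b) [^] (Suc n)" by (rule nat_pow_inv[OF xc, symmetric])
  finally have "xa a b [^] i = inv (xa a b) [^] (Suc n)" .
  then show ?thesis using pow_minus[OF a b s(1)] s(2) by auto
qed

end

definition sg :: "nat \<Rightarrow> nat" where "sg = transpose 1 2 \<circ> transpose 2 3 \<circ> transpose 3 4 \<circ> transpose 4 5"
definition sgi :: "nat \<Rightarrow> nat" where "sgi = transpose 4 5 \<circ> transpose 3 4 \<circ> transpose 2 3 \<circ> transpose 1 2"
definition tg :: "nat \<Rightarrow> nat" where "tg = transpose 1 3 \<circ> transpose 3 5 \<circ> transpose 5 4 \<circ> transpose 4 2"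
definition tgi :: "nat \<Rightarrow> nat" where "tgi = transpose 4 2 \<circ> transpose 5 4 \<circ> transpose 3 5 \<circ> transpose 1 3"

lemma perm_eq5:
  assumes "f 1 = g 1" "f 2 = g 2" "f 3 = g 3" "f 4 = g 4" "f 5 = g (5::nat)"
    "\<And>x. x \<noteq> 1 \<Longrightarrow> x \<noteq> 2 \<Longrightarrow> x \<noteq> 3 \<Longrightarrow> x \<noteq> 4 \<Longrightarrow> x \<noteq> 5 \<Longrightarrow> f x = g x"
  shows "f = g"
proof
  fix x show "f x = g x"
  proof (cases "x \<in> {1,2,3,4,5}")
    case True then show ?thesis using assms(1-5) by auto
  next
    case False then show ?thesis using assms(6)[of x] by auto
  qed
qed

lemmas pdefs = sg_def sgi_def tg_def tgi_def

lemma sg_eq: "tg \<circ> tg \<circ> sgi \<circ> tgi \<circ> sg \<circ> tgi = sg"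
  by (rule perm_eq5) (simp_all add: pdefs transpose_def)

lemma tg_eq: "sg \<circ> sg \<circ> tgi \<circ> sgi \<circ> tg \<circ> sgi = tg"
  by (rule perm_eq5) (simp_all add: pdefs transpose_def)

lemma sg_sgi: "sg \<circ> sgi = id" by (rule perm_eq5) (simp_all add: pdefs transpose_def)
lemma tg_tgi: "tg \<circ> tgi = id" by (rule perm_eq5) (simp_all add: pdefs transpose_def)
lemma sgi_inv: "sgi \<circ> sg = id" by (rule perm_eq5) (simp_all add: pdefs transpose_def)
lemma tgi_inv: "tgi \<circ> tg = id" by (rule perm_eq5) (simp_all add: pdefs transpose_def)

lemma sg_ne: "sg \<noteq> id"
proof
  assume "sg = id" then have "sg 1 = 1" by simp
  then show False by (simp add: sg_def transpose_def)
qed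

lemma perm_in: "sg \<in> carrier (sym_group 5)" "sgi \<in> carrier (sym_group 5)"
  "tg \<in> carrier (sym_group 5)" "tgi \<in> carrier (sym_group 5)"
  unfolding sym_group_carrier pdefs
  by (intro permutes_compose permutes_swap_id; simp)+

lemma Y_perfect:
  "derived (sym_group 5) (generate (sym_group 5) {sg, tg}) = generate (sym_group 5) {sg, tg}"
proof -
  interpret T: group "sym_group 5" by (rule sym_group_is_group)
  let ?Y = "generate (sym_group 5) {sg, tg}"
  have sub: "{sg, tg} \<subseteq> carrier (sym_group 5)" using perm_in by auto
  have sY: "subgroup ?Y (sym_group 5)" using T.generate_is_subgroup[OF sub] .
  have sY1: "sg \<in> ?Y" "tg \<in> ?Y" by (auto intro: generate.incl)
  have isg: "inv\<^bsub>sym_group 5\<^esub> sg = sgi" using T.inv_equality[of sgi sg] perm_in sgi_inv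
    by (simp add: sym_group_mult sym_group_one del: sym_group_inv_equality)
  have itg: "inv\<^bsub>sym_group 5\<^esub> tg = tgi" using T.inv_equality[of tgi tg] perm_in tgi_inv
    by (simp add: sym_group_mult sym_group_one del: sym_group_inv_equality)
  have Yinv: "sgi \<in> ?Y" "tgi \<in> ?Y" using isg itg sY1 subgroup.m_inv_closed[OF sY] by metis+
  have d1: "sg \<in> derived_set (sym_group 5) ?Y"
  proof -
    let ?h2 = "tg \<otimes>\<^bsub>sym_group 5\<^esub> sgi"
    have h2: "?h2 \<in> ?Y" using sY1 Yinv subgroup.m_closed[OF sY] by blast
    have ih2: "inv\<^bsub>sym_group 5\<^esub> ?h2 = sg \<otimes>\<^bsub>sym_group 5\<^esub> tgi"
    proof -
      have "inv\<^bsub>sym_group 5\<^esub> sgi = sg" using T.inv_equality[of sg sgi] perm_in sg_sgi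
        by (simp add: sym_group_mult sym_group_one del: sym_group_inv_equality)
      then show ?thesis using T.inv_mult_group[of tg sgi] perm_in itg by (simp del: sym_group_inv_equality)
    qed
    have "tg \<otimes>\<^bsub>sym_group 5\<^esub> ?h2 \<otimes>\<^bsub>sym_group 5\<^esub> inv\<^bsub>sym_group 5\<^esub> tg \<otimes>\<^bsub>sym_group 5\<^esub> inv\<^bsub>sym_group 5\<^esub> ?h2 = sg"
      using itg ih2 sg_eq by (simp add: sym_group_mult comp_assoc del: sym_group_inv_equality)
    then show ?thesis using sY1 h2 by blast
  qed
  have d2: "tg \<in> derived_set (sym_group 5) ?Y"
  proof -
    let ?h2 = "sg \<otimes>\<^bsub>sym_group 5\<^esub> tgi"
    have h2: "?h2 \<in> ?Y" using sY1 Yinv subgroup.m_closed[OF sY] by blast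
    have ih2: "inv\<^bsub>sym_group 5\<^esub> ?h2 = tg \<otimes>\<^bsub>sym_group 5\<^esub> sgi"
    proof -
      have "inv\<^bsub>sym_group 5\<^esub> tgi = tg" using T.inv_equality[of tg tgi] perm_in tg_tgi
        by (simp add: sym_group_mult sym_group_one del: sym_group_inv_equality)
      then show ?thesis using T.inv_mult_group[of sg tgi] perm_in isg by (simp del: sym_group_inv_equality)
    qed
    have "sg \<otimes>\<^bsub>sym_group 5\<^esub> ?h2 \<otimes>\<^bsub>sym_group 5\<^esub> inv\<^bsub>sym_group 5\<^esub> sg \<otimes>\<^bsub>sym_group 5\<^esub> inv\<^bsub>sym_group 5\<^esub> ?h2 = tg"
      using isg ih2 tg_eq by (simp add: sym_group_mult comp_assoc del: sym_group_inv_equality)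
    then show ?thesis using sY1 h2 by blast
  qed
  have "{sg, tg} \<subseteq> derived (sym_group 5) ?Y" using d1 d2 unfolding derived_def by (auto intro: generate.incl)
  then have "?Y \<subseteq> derived (sym_group 5) ?Y"
    using T.generate_subgroup_incl[OF _ T.derived_is_subgroup] sY subgroup.subset by blast
  moreover have "derived (sym_group 5) ?Y \<subseteq> ?Y" using T.derived_incl[OF subset_refl sY] .
  ultimately show ?thesis by blast
qed

lemma (in group) cyc_hom:
  assumes x: "x \<in> carrier G" and inf: "\<And>i::int. x [^] i = \<one> \<Longrightarrow> i = 0"
    and T: "group T" and s: "\<sigma> \<in> carrier T"
  shows "\<exists>\<phi>. (\<forall>g \<in> generate G {x}. \<phi> g \<in> carrier T) \<and>
     (\<forall>g\<in>generate G {x}. \<forall>g'\<in>generate G {x}. \<phi> (g \<otimes> g') = \<phi> g \<otimes>\<^bsub>T\<^esub> \<phi> g') \<and> \<phi> x = \<sigma>"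
proof -
  interpret T: group T by fact
  have gp: "generate G {x} = {x [^] (k::int) | k. k \<in> UNIV}" using generate_pow[OF x] .
  have uniq: "i = j" if "x [^] (i::int) = x [^] j" for i j
  proof -
    have "x [^] (i - j) = x [^] i \<otimes> inv (x [^] j)" using int_pow_diff[OF x] .
    also have "\<dots> = \<one>" using that x by simp
    finally show ?thesis using inf by fastforce
  qed
  define \<phi> where "\<phi> g = \<sigma> [^]\<^bsub>T\<^esub> (THE i::int. g = x [^] i)" for g
  have phi_pow: "\<phi> (x [^] i) = \<sigma> [^]\<^bsub>T\<^esub> i" for i :: int
  proof -
    have "(THE j::int. x [^] i = x [^] j) = i" using uniq by (intro the_equality) auto
    then show ?thesis unfolding \<phi>_def by simp
  qed
  show ?thesis
  proof (intro exI[of _ \<phi>] conjI ballI)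
    fix g assume "g \<in> generate G {x}" then obtain i where "g = x [^] (i::int)" using gp by auto
    then show "\<phi> g \<in> carrier T" using phi_pow s by simp
  next
    fix g g' assume "g \<in> generate G {x}" "g' \<in> generate G {x}"
    then obtain i j where ij: "g = x [^] (i::int)" "g' = x [^] (j::int)" using gp by auto
    have "g \<otimes> g' = x [^] (i + j)" using ij int_pow_mult[OF x] by simp
    then show "\<phi> (g \<otimes> g') = \<phi> g \<otimes>\<^bsub>T\<^esub> \<phi> g'" using ij phi_pow T.int_pow_mult[OF s] by simp
  next
    show "\<phi> x = \<sigma>" using phi_pow[of 1] x s by simp
  qed
qed

lemma alt_tl:
  assumes "alternating_word M A B (z # rest)" "rest \<noteq> []"
  shows "alternating_word M A B rest" "hd rest \<in> (A \<union> B) - {\<one>\<^bsub>M\<^esub>}"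
    "\<not> (z \<in> A \<and> hd rest \<in> A)" "\<not> (z \<in> B \<and> hd rest \<in> B)"
proof -
  have s: "set (z # rest) \<subseteq> (A \<union> B) - {\<one>\<^bsub>M\<^esub>}"
    and al: "\<And>i. Suc i < length (z # rest) \<Longrightarrow> \<not> ((z # rest) ! i \<in> A \<and> (z # rest) ! Suc i \<in> A) \<and>
       \<not> ((z # rest) ! i \<in> B \<and> (z # rest) ! Suc i \<in> B)"
    using assms(1) unfolding alternating_word_def by auto
  have "\<forall>i. Suc i < length rest \<longrightarrow> \<not> (rest ! i \<in> A \<and> rest ! Suc i \<in> A) \<and> \<not> (rest ! i \<in> B \<and> rest ! Suc i \<in> B)"
  proof (intro allI impI)
    fix i assume "Suc i < length rest"
    then show "\<not> (rest ! i \<in> A \<and> rest ! Suc i \<in> A) \<and> \<not> (rest ! i \<in> B \<and> rest ! Suc i \<in> B)"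
      using al[of "Suc i"] by simp
  qed
  then show "alternating_word M A B rest" unfolding alternating_word_def using s assms(2) by auto
  show "hd rest \<in> (A \<union> B) - {\<one>\<^bsub>M\<^esub>}" using s assms(2) by (cases rest) auto
  show "\<not> (z \<in> A \<and> hd rest \<in> A)" "\<not> (z \<in> B \<and> hd rest \<in> B)"
    using al[of 0] assms(2) by (cases rest; simp)+
qed

context fprod begin

lemma derived_pow_sub: "subgroup C N \<Longrightarrow> (derived N ^^ n) C \<subseteq> C"
proof (induction n)
  case 0 then show ?case by simp
next
  case (Suc n)
  then show ?case using derived_incl[OF Suc.IH[OF Suc.prems] Suc.prems] by simp
qed

lemma derived_pow_consistent:
  assumes "subgroup C N" shows "(derived (N\<lparr>carrier := C\<rparr>) ^^ n) C = (derived N ^^ n) C"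
proof (induction n)
  case 0 then show ?case by simp
next
  case (Suc n)
  have "(derived N ^^ n) C \<subseteq> C" using derived_pow_sub[OF assms] .
  then show ?case using Suc derived_consistent[OF _ assms] by simp
qed

end

context fprod begin

lemma nonsolv:
  assumes a1: "a1 \<in> G" "a1 \<noteq> \<one>" and a2: "a2 \<in> G" "a2 \<noteq> \<one>" and a12: "a1 \<noteq> a2"
    and b: "b \<in> H" "b \<noteq> \<one>"
  shows "\<not> solvable N"
proof
  assume solv: "solvable N"
  define x1 where "x1 = xa a1 b"
  define x2 where "x2 = xa a2 b"
  define X1 where "X1 = Xp a1 b \<union> Xm a1 b"
  define X2 where "X2 = Xp a2 b \<union> Xm a2 b"
  have x1c: "x1 \<in> carrier N" and x2c: "x2 \<in> carrier N" using xa_c a1 a2 b x1_def x2_def by auto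
  have a1c: "a1 \<in> carrier N" and a2c: "a2 \<in> carrier N" using a1 a2 G_carr by auto
  have disj: "X1 \<inter> X2 = {}"
  proof -
    have "a1 \<noteq> b" "a2 \<noteq> b" using GH_ne a1 a2 b by auto
    moreover have "inv a1 \<noteq> inv a2"
    proof
      assume "inv a1 = inv a2" then have "inv (inv a1) = inv (inv a2)" by simp
      then show False using a12 a1c a2c by simp
    qed
    ultimately show ?thesis unfolding X1_def X2_def Xp_def Xm_def using a12 by auto
  qed
  have one1: "\<one> \<notin> X1" "\<one> \<notin> X2" using one_notin_X by (auto simp: X1_def X2_def)
  have pw1: "x1 [^] i \<otimes> s \<in> X1" if "i \<noteq> 0" "s \<in> carrier N" "s \<notin> X1" for i :: int and s
    using ipow[OF a1 b that(1) that(2)] that(3) X1_def x1_def by simp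
  have pw2: "x2 [^] i \<otimes> s \<in> X2" if "i \<noteq> 0" "s \<in> carrier N" "s \<notin> X2" for i :: int and s
    using ipow[OF a2 b that(1) that(2)] that(3) X2_def x2_def by simp
  have inX1: "x1 [^] i \<in> X1" if "i \<noteq> 0" for i :: int using pw1[OF that one_closed one1(1)] x1c by simp
  have inX2: "x2 [^] i \<in> X2" if "i \<noteq> 0" for i :: int using pw2[OF that one_closed one1(2)] x2c by simp
  define GG where "GG = generate N {x1}"
  define HH where "HH = generate N {x2}"
  define C where "C = generate N {x1, x2}"
  have sGG: "subgroup GG N" using generate_is_subgroup x1c by (simp add: GG_def)
  have sHH: "subgroup HH N" using generate_is_subgroup x2c by (simp add: HH_def)
  have sC: "subgroup C N" using generate_is_subgroup x1c x2c by (simp add: C_def)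
  have GGC: "GG \<subseteq> C" unfolding GG_def C_def by (rule mono_generate) auto
  have HHC: "HH \<subseteq> C" unfolding HH_def C_def by (rule mono_generate) auto
  have GGp: "GG = {x1 [^] (k::int) | k. k \<in> UNIV}" using generate_pow[OF x1c] GG_def by simp
  have HHp: "HH = {x2 [^] (k::int) | k. k \<in> UNIV}" using generate_pow[OF x2c] HH_def by simp
  have GGX: "g \<in> X1" if gG: "g \<in> GG" and g1: "g \<noteq> \<one>" for g
  proof -
    obtain i where gi: "g = x1 [^] (i::int)" using gG GGp by auto
    then have "i \<noteq> 0" using g1 by auto
    then show ?thesis using inX1 gi by simp
  qed
  have HHX: "g \<in> X2" if gG: "g \<in> HH" and g1: "g \<noteq> \<one>" for g
  proof -
    obtain i where gi: "g = x2 [^] (i::int)" using gG HHp by auto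
    then have "i \<noteq> 0" using g1 by auto
    then show ?thesis using inX2 gi by simp
  qed
  have int: "GG \<inter> HH = {\<one>}"
  proof
    show "{\<one>} \<subseteq> GG \<inter> HH" using sGG sHH subgroup.one_closed by blast
    show "GG \<inter> HH \<subseteq> {\<one>}" using GGX HHX disj by blast
  qed
  have GGc: "GG \<subseteq> carrier N" and HHc: "HH \<subseteq> carrier N" using sGG sHH subgroup.subset by auto
  define F where "F = N\<lparr>carrier := C\<rparr>"
  have Fg: "group F" using subgroup_imp_group[OF sC] F_def by simp
  have F_simps: "carrier F = C" "monoid.mult F = monoid.mult N" "one F = \<one>" unfolding F_def by simp_all
  have claim: "(hd xs \<in> GG \<longrightarrow> wprod xs \<in> X1) \<and> (hd xs \<in> HH \<longrightarrow> wprod xs \<in> X2)"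
    if "alternating_word F GG HH xs" for xs
    using that
  proof (induction xs)
    case Nil then show ?case unfolding alternating_word_def by simp
  next
    case (Cons z rest)
    have zs: "z \<in> (GG \<union> HH) - {\<one>}" using Cons.prems F_simps unfolding alternating_word_def by auto
    have zc: "z \<in> carrier N" using zs GGc HHc by auto
    show ?case
    proof (cases "rest = []")
      case True
      have "wprod (z # rest) = z" using True zc by simp
      then show ?thesis using zs GGX HHX by auto
    next
      case False
      note at = alt_tl[OF Cons.prems False]
      have IH: "(hd rest \<in> GG \<longrightarrow> wprod rest \<in> X1) \<and> (hd rest \<in> HH \<longrightarrow> wprod rest \<in> X2)"
        using Cons.IH[OF at(1)] .
      have restc: "set rest \<subseteq> carrier N" using at(1) GGc HHc F_simps unfolding alternating_word_def by auto
      have wr: "wprod rest \<in> carrier N" using wprod_closed[OF restc] .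
      have hr: "hd rest \<in> GG \<union> HH" using at(2) by auto
      have A: "wprod (z # rest) \<in> X1" if zG: "z \<in> GG"
      proof -
        have "hd rest \<in> HH" using at(3) zG hr by auto
        then have "wprod rest \<in> X2" using IH by simp
        then have "wprod rest \<notin> X1" using disj by auto
        moreover obtain i where zi: "z = x1 [^] (i::int)" using zG GGp by auto
        moreover have "i \<noteq> 0" using zs zi by auto
        ultimately show ?thesis using pw1 wr by simp
      qed
      have B: "wprod (z # rest) \<in> X2" if zH: "z \<in> HH"
      proof -
        have "hd rest \<in> GG" using at(4) zH hr by auto
        then have "wprod rest \<in> X1" using IH by simp
        then have "wprod rest \<notin> X2" using disj by auto
        moreover obtain i where zi: "z = x2 [^] (i::int)" using zH HHp by auto
        moreover have "i \<noteq> 0" using zs zi by auto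
        ultimately show ?thesis using pw2 wr by simp
      qed
      show ?thesis using A B by simp
    qed
  qed
  have fpF: "free_product F GG HH"
    unfolding free_product_def
  proof (intro conjI allI impI)
    show "subgroup GG F" unfolding F_def by (rule subgroup_incl[OF sGG sC GGC])
    show "subgroup HH F" unfolding F_def by (rule subgroup_incl[OF sHH sC HHC])
    show "GG \<inter> HH = {\<one>\<^bsub>F\<^esub>}" using int F_simps by simp
    show "generate F (GG \<union> HH) = carrier F"
    proof -
      have "generate F (GG \<union> HH) = generate N (GG \<union> HH)"
        unfolding F_def using generate_consistent[OF _ sC] GGC HHC by simp
      also have "\<dots> = C"
      proof
        show "generate N (GG \<union> HH) \<subseteq> C" using generate_subgroup_incl[OF _ sC] GGC HHC by simp
        have "{x1, x2} \<subseteq> GG \<union> HH" unfolding GG_def HH_def by (auto intro: generate.incl)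
        then show "C \<subseteq> generate N (GG \<union> HH)" unfolding C_def by (rule mono_generate)
      qed
      finally show ?thesis using F_simps by simp
    qed
    fix xs assume aw: "alternating_word F GG HH xs"
    have ne: "xs \<noteq> []" and "hd xs \<in> GG \<union> HH" using aw unfolding alternating_word_def
      by (auto, metis hd_in_set subsetD UnE DiffD1)
    then have "wprod xs \<in> X1 \<union> X2" using claim[OF aw] by auto
    then have "wprod xs \<noteq> \<one>" using one1 by auto
    then show "foldr (\<otimes>\<^bsub>F\<^esub>) xs \<one>\<^bsub>F\<^esub> \<noteq> \<one>\<^bsub>F\<^esub>" using F_simps by simp
  qed
  interpret FP: fprod F GG HH using fpF Fg unfolding fprod_def fprod_axioms_def by simp
  let ?T = "sym_group 5"
  have T: "group ?T" by (rule sym_group_is_group)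
  have inf1: "i = 0" if "x1 [^] i = \<one>" for i :: int using inX1 one1 that by force
  have inf2: "i = 0" if "x2 [^] i = \<one>" for i :: int using inX2 one1 that by force
  obtain \<phi> where phi: "\<forall>g\<in>GG. \<phi> g \<in> carrier ?T" "\<forall>g\<in>GG. \<forall>g'\<in>GG. \<phi> (g \<otimes> g') = \<phi> g \<otimes>\<^bsub>?T\<^esub> \<phi> g'" "\<phi> x1 = sg"
    using cyc_hom[OF x1c inf1 T perm_in(1)] GG_def by blast
  obtain \<psi> where psi: "\<forall>g\<in>HH. \<psi> g \<in> carrier ?T" "\<forall>g\<in>HH. \<forall>g'\<in>HH. \<psi> (g \<otimes> g') = \<psi> g \<otimes>\<^bsub>?T\<^esub> \<psi> g'" "\<psi> x2 = tg"
    using cyc_hom[OF x2c inf2 T perm_in(3)] HH_def by blast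
  obtain \<Psi> where Psi: "\<Psi> \<in> hom F ?T" "\<forall>g\<in>GG. \<Psi> g = \<phi> g" "\<forall>h\<in>HH. \<Psi> h = \<psi> h"
    using FP.univ[OF T, of \<phi> \<psi>] phi psi F_simps by auto
  have x1G: "x1 \<in> GG" and x2H: "x2 \<in> HH" unfolding GG_def HH_def by (auto intro: generate.incl)
  have P1: "\<Psi> x1 = sg" "\<Psi> x2 = tg" using Psi phi psi x1G x2H by auto
  interpret gh: group_hom F ?T \<Psi> using Psi(1) T Fg by (simp add: group_hom_def group_hom_axioms_def)
  have x12C: "{x1, x2} \<subseteq> C" unfolding C_def by (auto intro: generate.incl)
  have cF: "carrier F = generate F {x1, x2}"
    using F_simps generate_consistent[OF x12C sC] C_def F_def by simp
  have imgY: "\<Psi> ` carrier F = generate ?T {sg, tg}"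
    using gh.generate_img[of "{x1, x2}"] x12C F_simps cF P1 by simp
  obtain n where n: "(derived N ^^ n) (carrier N) = {\<one>}"
    using solv solvable_iff_trivial_derived_seq by blast
  have dC: "(derived N ^^ n) C \<subseteq> {\<one>}" using mono_exp_of_derived[of C "carrier N" n] n sC subgroup.subset by blast
  have dF: "(derived F ^^ n) (carrier F) = (derived N ^^ n) C"
    using derived_pow_consistent[OF sC, of n] F_simps F_def by simp
  have dY: "(derived ?T ^^ n) (generate ?T {sg, tg}) = generate ?T {sg, tg}"
    by (induction n) (simp_all add: Y_perfect)
  have "(derived ?T ^^ n) (\<Psi> ` carrier F) = \<Psi> ` ((derived F ^^ n) (carrier F))"
    using gh.exp_of_derived_img[of "carrier F" n] by simp
  then have "generate ?T {sg, tg} \<subseteq> \<Psi> ` {\<one>}" using imgY dY dF dC by auto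
  moreover have "sg \<in> generate ?T {sg, tg}" by (auto intro: generate.incl)
  moreover have "\<Psi> \<one> = id" using gh.hom_one F_simps by (simp add: sym_group_one)
  ultimately show False using sg_ne by auto
qed

end

lemma Dinf_simps [simp]: "carrier Dinf = UNIV" "one Dinf = (0, False)"
  "monoid.mult Dinf x y = (fst x + (if snd x then - fst y else fst y), snd x \<noteq> snd y)"
  unfolding Dinf_def by simp_all

lemma Dinf_group: "group Dinf"
proof (rule groupI)
  fix x y z :: "int \<times> bool"
  show "x \<otimes>\<^bsub>Dinf\<^esub> y \<otimes>\<^bsub>Dinf\<^esub> z = x \<otimes>\<^bsub>Dinf\<^esub> (y \<otimes>\<^bsub>Dinf\<^esub> z)"
    by (cases x; cases y; cases z) auto
next
  fix x :: "int \<times> bool"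
  show "\<one>\<^bsub>Dinf\<^esub> \<otimes>\<^bsub>Dinf\<^esub> x = x" by (cases x) simp
  obtain n s where x: "x = (n, s)" by fastforce
  have "(if s then n else - n, s) \<otimes>\<^bsub>Dinf\<^esub> x = \<one>\<^bsub>Dinf\<^esub>" using x by auto
  moreover have "(if s then n else - n, s) \<in> carrier Dinf" by simp
  ultimately show "\<exists>y\<in>carrier Dinf. y \<otimes>\<^bsub>Dinf\<^esub> x = \<one>\<^bsub>Dinf\<^esub>" by blast
qed auto

context fprod begin

lemma dinf:
  assumes Ga: "G = {\<one>, a}" "a \<noteq> \<one>" and Hb: "H = {\<one>, b}" "b \<noteq> \<one>"
  shows "N \<cong> Dinf"
proof -
  interpret D: group Dinf by (rule Dinf_group)
  have aG: "a \<in> G" and bH: "b \<in> H" using Ga Hb by auto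
  have ac: "a \<in> carrier N" and bc: "b \<in> carrier N" using aG bH G_carr H_carr by auto
  have aa: "a \<otimes> a = \<one>"
  proof -
    have "inv a \<in> G" using subgroup.m_inv_closed[OF sgG aG] .
    moreover have "inv a \<noteq> \<one>" using Ga(2) ac by simp
    ultimately have "inv a = a" using Ga by auto
    then show ?thesis using ac by (metis r_inv)
  qed
  have bb: "b \<otimes> b = \<one>"
  proof -
    have "inv b \<in> H" using subgroup.m_inv_closed[OF sgH bH] .
    moreover have "inv b \<noteq> \<one>" using Hb(2) bc by simp
    ultimately have "inv b = b" using Hb by auto
    then show ?thesis using bc by (metis r_inv)
  qed
  define \<phi> where "\<phi> g = (if g = \<one> then (0::int, False) else (0, True))" for g
  define \<psi> where "\<psi> h = (if h = \<one> then (0::int, False) else (1, True))" for h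
  obtain \<Psi> where Psi: "\<Psi> \<in> hom N Dinf" "\<forall>g\<in>G. \<Psi> g = \<phi> g" "\<forall>h\<in>H. \<Psi> h = \<psi> h"
  proof -
    have "\<exists>\<Psi> \<in> hom N Dinf. (\<forall>g\<in>G. \<Psi> g = \<phi> g) \<and> (\<forall>h\<in>H. \<Psi> h = \<psi> h)"
    proof (rule univ[OF Dinf_group])
      show "\<phi> x \<in> carrier Dinf" for x by simp
      show "\<psi> x \<in> carrier Dinf" for x by simp
      show "\<phi> (x \<otimes> y) = \<phi> x \<otimes>\<^bsub>Dinf\<^esub> \<phi> y" if "x \<in> G" "y \<in> G" for x y
        using that Ga aa ac by (auto simp: \<phi>_def)
      show "\<psi> (x \<otimes> y) = \<psi> x \<otimes>\<^bsub>Dinf\<^esub> \<psi> y" if "x \<in> H" "y \<in> H" for x y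
        using that Hb bb bc by (auto simp: \<psi>_def)
    qed
    then show ?thesis using that by blast
  qed
  interpret gh: group_hom N Dinf \<Psi> using Psi(1) Dinf_group by (simp add: group_hom_def group_hom_axioms_def is_group)
  have Pa: "\<Psi> a = (0, True)" and Pb: "\<Psi> b = (1, True)"
    using Psi aG bH Ga(2) Hb(2) by (auto simp: \<phi>_def \<psi>_def)
  have LLab: "LL = {a, b}" unfolding LL_def using Ga Hb by auto
  have ab: "a \<noteq> b" using GH_int aG bH Ga(2) by auto
  have sameaa: "same a a" and samebb: "same b b" and nab: "\<not> same a b" "\<not> same b a"
    using aG bH GH_int Ga(2) Hb(2) unfolding same_def by auto
  have form: "w \<noteq> [] \<longrightarrow>
     (hd w = a \<longrightarrow> \<Psi> (wprod w) = (- int (length w div 2), odd (length w))) \<and>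
     (hd w = b \<longrightarrow> \<Psi> (wprod w) = (int (length w div 2) + (if odd (length w) then 1 else 0), odd (length w)))"
    if "red w" for w
    using that
  proof (induction w)
    case Nil then show ?case by simp
  next
    case (Cons c w')
    have c: "c \<in> {a, b}" using Cons.prems LLab by (simp add: red_Cons)
    have rw': "red w'" using Cons.prems red_tl by blast
    have sc: "set w' \<subseteq> carrier N" using red_set_carr[OF rw'] .
    have wc: "wprod w' \<in> carrier N" using wprod_closed[OF sc] .
    have cc: "c \<in> carrier N" using c ac bc by auto
    have P: "\<Psi> (wprod (c # w')) = \<Psi> c \<otimes>\<^bsub>Dinf\<^esub> \<Psi> (wprod w')" using cc wc by simp
    show ?case
    proof (cases "w' = []")
      case True
      then show ?thesis using P Pa Pb c ab by auto
    next
      case False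
      have hw: "hd w' \<in> {a, b}" using rw' False LLab by (cases w') (auto simp: red_Cons)
      have nsame: "\<not> same c (hd w')" using Cons.prems False by (cases w') (auto simp: red_Cons)
      have IH: "(hd w' = a \<longrightarrow> \<Psi> (wprod w') = (- int (length w' div 2), odd (length w'))) \<and>
         (hd w' = b \<longrightarrow> \<Psi> (wprod w') = (int (length w' div 2) + (if odd (length w') then 1 else 0), odd (length w')))"
        using Cons.IH[OF rw'] False by simp
      show ?thesis
      proof (cases "c = a")
        case True
        then have "hd w' = b" using hw nsame sameaa by auto
        then show ?thesis using True P Pa IH ab by (auto elim: oddE)
      next
        case False
        then have cb: "c = b" using c by simp
        then have "hd w' = a" using hw nsame samebb by auto
        then show ?thesis using cb P Pb IH ab by (auto elim: oddE)
      qed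
    qed
  qed
  have inj: "\<forall>x\<in>carrier N. \<Psi> x = \<one>\<^bsub>Dinf\<^esub> \<longrightarrow> x = \<one>"
  proof (intro ballI impI)
    fix x assume x: "x \<in> carrier N" and P1: "\<Psi> x = \<one>\<^bsub>Dinf\<^esub>"
    show "x = \<one>"
    proof (rule ccontr)
      assume "x \<noteq> \<one>"
      then have ne: "nf x \<noteq> []" using nf(2)[OF x] by auto
      have "hd (nf x) \<in> {a, b}" using nf(1)[OF x] ne LLab by (cases "nf x") (auto simp: red_Cons)
      then show False using form[OF nf(1)[OF x]] ne P1 nf(2)[OF x] by (auto elim: oddE)
    qed
  qed
  have surjF: "\<exists>x\<in>carrier N. \<Psi> x = (int k, False) \<and> (\<exists>y\<in>carrier N. \<Psi> y = (- int k, False))" for k :: nat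
  proof (induction k)
    case 0
    have "\<Psi> \<one> = (0, False)" using gh.hom_one by simp
    then show ?case by force
  next
    case (Suc k)
    then obtain x y where xy: "x \<in> carrier N" "\<Psi> x = (int k, False)" "y \<in> carrier N" "\<Psi> y = (- int k, False)" by blast
    have "\<Psi> (b \<otimes> a \<otimes> x) = (int (Suc k), False)" using xy ac bc Pa Pb by simp
    moreover have "\<Psi> (a \<otimes> b \<otimes> y) = (- int (Suc k), False)" using xy ac bc Pa Pb by simp
    ultimately show ?case using xy ac bc by (meson m_closed)
  qed
  have surj: "carrier Dinf \<subseteq> \<Psi> ` carrier N"
  proof
    fix z :: "int \<times> bool" assume "z \<in> carrier Dinf"
    obtain n s where z: "z = (n, s)" by fastforce
    obtain x where x: "x \<in> carrier N" "\<Psi> x = (n, False)"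
    proof (cases "n \<ge> 0")
      case True then show ?thesis using surjF[of "nat n"] that by auto
    next
      case False then show ?thesis using surjF[of "nat (- n)"] that by auto
    qed
    show "z \<in> \<Psi> ` carrier N"
    proof (cases s)
      case False then show ?thesis using x z by (metis image_eqI)
    next
      case True
      have "\<Psi> (x \<otimes> a) = (n, True)" using x ac Pa by simp
      then show ?thesis using x ac z True by (metis image_eqI m_closed)
    qed
  qed
  have "\<Psi> \<in> iso N Dinf" using gh.iso_iff surj inj by blast
  then show ?thesis by (rule is_isoI)
qed

end

theorem lemma6p1:
  fixes N :: "('a, 'b) monoid_scheme" and K G H :: "'a set"
  assumes "group N"
    and "K \<lhd> N"
    and "perfect_subgroup N K"
    and "solvable (N Mod K)"
    and "free_product N G H"
  shows "perfect_subgroup N G \<or> perfect_subgroup N H \<or> N Mod K \<cong> Dinf"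
proof -
  interpret fprod N G H using assms(1,5) unfolding fprod_def fprod_axioms_def by simp
  have dK: "derived N K = K" using assms(3) unfolding perfect_subgroup_def by simp
  interpret fpq N G H K using fprod_axioms assms(2) dK unfolding fpq_def fpq_axioms_def by simp
  have Kc: "K \<subseteq> carrier N" using K_sub subgroup.subset by blast
  have SG: "group S" by (rule S_group)
  have fS: "free_product S (q ` G) (q ` H)" by (rule quotient_free)
  interpret Q: fprod S "q ` G" "q ` H" using SG fS unfolding fprod_def fprod_axioms_def by simp
  interpret Q': fprod S "q ` H" "q ` G" using fprod_swap[OF Q.fprod_axioms] .
  have solS: "solvable S" using assms(4) S_def by simp
  show ?thesis
  proof (cases "q ` G \<subseteq> {\<one>\<^bsub>S\<^esub>}")
    case True
    have "G \<subseteq> K"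
    proof
      fix g assume "g \<in> G"
      then have "q g = \<one>\<^bsub>S\<^esub>" using True by auto
      then show "g \<in> K" using q_one_iff \<open>g \<in> G\<close> G_carr by auto
    qed
    then show ?thesis using perfect_if_sub[OF Kc dK] by simp
  next
    case nG: False
    show ?thesis
    proof (cases "q ` H \<subseteq> {\<one>\<^bsub>S\<^esub>}")
      case True
      have "H \<subseteq> K"
      proof
        fix h assume "h \<in> H"
        then have "q h = \<one>\<^bsub>S\<^esub>" using True by auto
        then show "h \<in> K" using q_one_iff \<open>h \<in> H\<close> H_carr by auto
      qed
      interpret fH: fprod N H G using fprod_swap[OF fprod_axioms] .
      have "perfect_subgroup N H" using fH.perfect_if_sub[OF Kc dK \<open>H \<subseteq> K\<close>] .
      then show ?thesis by simp
    next
      case nH: False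
      obtain a where a: "a \<in> q ` G" "a \<noteq> \<one>\<^bsub>S\<^esub>" using nG by auto
      obtain b where b: "b \<in> q ` H" "b \<noteq> \<one>\<^bsub>S\<^esub>" using nH by auto
      have Ga: "q ` G = {\<one>\<^bsub>S\<^esub>, a}"
      proof
        show "{\<one>\<^bsub>S\<^esub>, a} \<subseteq> q ` G" using a Q.sgG subgroup.one_closed by blast
        show "q ` G \<subseteq> {\<one>\<^bsub>S\<^esub>, a}"
        proof
          fix a' assume a': "a' \<in> q ` G"
          show "a' \<in> {\<one>\<^bsub>S\<^esub>, a}"
          proof (rule ccontr)
            assume "a' \<notin> {\<one>\<^bsub>S\<^esub>, a}"
            then have "\<not> solvable S" using Q.nonsolv[OF a(1) a(2) a' _ _ b] by auto
            then show False using solS by simp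
          qed
        qed
      qed
      have Hb: "q ` H = {\<one>\<^bsub>S\<^esub>, b}"
      proof
        show "{\<one>\<^bsub>S\<^esub>, b} \<subseteq> q ` H" using b Q.sgH subgroup.one_closed by blast
        show "q ` H \<subseteq> {\<one>\<^bsub>S\<^esub>, b}"
        proof
          fix b' assume b': "b' \<in> q ` H"
          show "b' \<in> {\<one>\<^bsub>S\<^esub>, b}"
          proof (rule ccontr)
            assume "b' \<notin> {\<one>\<^bsub>S\<^esub>, b}"
            then have "\<not> solvable S" using Q'.nonsolv[OF b(1) b(2) b' _ _ a] by auto
            then show False using solS by simp
          qed
        qed
      qed
      have "S \<cong> Dinf" using Q.dinf[OF Ga a(2) Hb b(2)] .
      then show ?thesis using S_def by simp
    qed
  qed
qed

end
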